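(* Assume (A4), let $\rho>0$ be such that $(\nabla X(0),\nabla X(\rho e_1))$ has a nondegenerate distribution, and set $t=\rho e_1$. Let $(\xi(0),\xi(t))$ be a pair of random symmetric matrices distributed as $(\nabla^2X(0),\nabla^2X(t))$ conditionally on $\nabla X(0)=\nabla X(t)=0$. Write $\xi_d(s)=(\xi_{11}(s),\dots,\xi_{NN}(s))$ and $\xi_u(s)=(\xi_{12}(s),\xi_{13}(s),\dots,\xi_{1N}(s),\xi_{23}(s),\dots,\xi_{(N-1)N}(s))$ (lexicographic order). Then $(\xi_d(0),\xi_u(0),\xi_d(t),\xi_u(t))$ is centred Gaussian with covariance matrix $$\begin{pmatrix}\Gamma_1&0&\Gamma_3&0\\0&\Gamma_2&0&\Gamma_4\\\Gamma_3&0&\Gamma_1&0\\0&\Gamma_4&0&\Gamma_2\end{pmatrix},$$ where, writing $\mathbf r,\mathbf r',\mathbf r'',\mathbf r''',\mathbf r^{(4)}$ for these functions evaluated at $\rho^2$, $a:=4\mathbf r''+8\rho^2\mathbf r'''$ and $d:=12\mathbf r''+48\rho^2\mathbf r'''+16\rho^4\mathbf r^{(4)}$: $\Gamma_1=4\mathbf r''(0)(2Id_N+J_{N,N})+\dfrac{\rho^2\mathbf r'(0)}{2[\mathbf r'(0)^2-(\mathbf r'+2\mathbf r''\rho^2)^2]}M$; $\Gamma_3=T+\dfrac{\rho^2(\mathbf r'+2\mathbf r''\rho^2)}{2[\mathbf r'(0)^2-(\mathbf r'+2\mathbf r''\rho^2)^2]}M$, where $T$ is the $N\times N$ symmetric matrix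 with $T_{11}=d$, $T_{1j}=T_{j1}=a$ for $j\ge2$, $T_{jj}=12\mathbf r''$ and $T_{jk}=4\mathbf r''$ for $j\ne k$, $j,k\ge2$; $M$ is the $N\times N$ symmetric matrix with $M_{11}=(12\mathbf r''+8\rho^2\mathbf r''')^2$, $M_{1j}=M_{j1}=4\mathbf r''(12\mathbf r''+8\rho^2\mathbf r''')$ for $j\ge2$, and $M_{jk}=16\mathbf r''^2$ for $j,k\ge2$; $\Gamma_2=\operatorname{diag}(D_1,D_2)$ with $D_1=\Big(4\mathbf r''(0)+\dfrac{8\rho^2(\mathbf r'')^2\mathbf r'(0)}{\mathbf r'(0)^2-(\mathbf r')^2}\Big)Id_{N-1}$ and $D_2=4\mathbf r''(0)Id_{(N-1)(N-2)/2}$; $\Gamma_4=\operatorname{diag}(\tilde D_1,\tilde D_2)$ with $\tilde D_1=\Big(a+\dfrac{8\rho^2(\mathbf r'')^2\mathbf r'}{\mathbf r'(0)^2-(\mathbf r')^2}\Big)Id_{N-1}$ and $\tilde D_2=4\mathbf r''Id_{(N-1)(N-2)/2}$.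
   Context: Assumption (A4): $\mathcal X=\{X(t):t\in\mathbb R^N\}$ is a stationary isotropic real Gaussian field, centred with variance 1, with covariance $\operatorname{E}(X(s)X(t))=\mathbf r(\|s-t\|^2)$, $\mathbf r\in\mathcal C^4$ (equivalently the spectral moment $\lambda_8$ is finite), $\lambda_2=-2\mathbf r'(0)>0$, where $\lambda_{2n}=(-1)^n\frac{(2n)!}{n!}\mathbf r^{(n)}(0)$; when $N=1$, also $\lambda_{2n}\lambda_{2n-4}>\lambda_{2n-2}^2$ for $n=2,3,4$. $e_1=(1,0,\dots,0)$; $Id_n$ is the identity; $J_{n,p}$ the $n\times p$ matrix of ones. *)

theory Defs
  imports "HOL-Probability.Probability"
begin

(* Centred Gaussian family indexed by I with covariance K, defined through
   characteristic functions of all finite linear combinations (this also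
   covers degenerate Gaussian laws). *)
definition centred_gaussian ::
  "'a measure \<Rightarrow> ('i \<Rightarrow> 'a \<Rightarrow> real) \<Rightarrow> 'i set \<Rightarrow> ('i \<Rightarrow> 'i \<Rightarrow> real) \<Rightarrow> bool" where
  "centred_gaussian M Y I K \<longleftrightarrow>
     (\<forall>i\<in>I. Y i \<in> borel_measurable M) \<and>
     (\<forall>F c. finite F \<longrightarrow> F \<subseteq> I \<longrightarrow>
        (CLINT \<omega>|M. iexp (\<Sum>i\<in>F. c i * Y i \<omega>))
          = complex_of_real (exp (- (\<Sum>i\<in>F. \<Sum>j\<in>F. c i * c j * K i j) / 2)))"

definition partial :: "'n::finite \<Rightarrow> (real^'n \<Rightarrow> real) \<Rightarrow> real^'n \<Rightarrow> real" where
  "partial i f s = deriv (\<lambda>h. f (s + h *\<^sub>R axis i 1)) 0"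

definition C2_fun :: "(real^'n::finite \<Rightarrow> real) \<Rightarrow> bool" where
  "C2_fun f \<longleftrightarrow> (\<forall>i j s.
      ((\<lambda>h. f (s + h *\<^sub>R axis i 1)) has_real_derivative partial i f s) (at 0) \<and>
      ((\<lambda>h. partial j f (s + h *\<^sub>R axis i 1)) has_real_derivative partial i (partial j f) s) (at 0))
    \<and> (\<forall>i. continuous_on UNIV (partial i f))
    \<and> (\<forall>i j. continuous_on UNIV (partial i (partial j f)))"

(* spectral moments: lambda_{2n} = (-1)^n (2n)!/n! r^(n)(0), with D k = k-th derivative of r *)
definition lam :: "(nat \<Rightarrow> real \<Rightarrow> real) \<Rightarrow> nat \<Rightarrow> real" where
  "lam D n = (-1)^n * fact (2*n) / fact n * D n 0"

definition gcov :: "'a measure \<Rightarrow> ('a \<Rightarrow> real) \<Rightarrow> ('a \<Rightarrow> real) \<Rightarrow> real" where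
  "gcov M U V = (LINT \<omega>|M. U \<omega> * V \<omega>)"

(* Gaussian regression: the conditional law of Z given Y = 0 (Y, Z jointly centred
   Gaussian, Y nondegenerate) is the law of Z - Cov(Z,Y) Cov(Y)^{-1} Y. *)
definition regress :: "'a measure \<Rightarrow> ('p::finite \<Rightarrow> 'a \<Rightarrow> real) \<Rightarrow> ('q \<Rightarrow> 'a \<Rightarrow> real) \<Rightarrow> 'q \<Rightarrow> 'a \<Rightarrow> real" where
  "regress M Y Z q \<omega> = Z q \<omega> -
     (\<Sum>p\<in>UNIV. \<Sum>p'\<in>UNIV. gcov M (Z q) (Y p)
        * (matrix_inv (\<chi> p1 p2. gcov M (Y p1) (Y p2)) :: real^'p^'p) $ p $ p' * Y p' \<omega>)"

(* Index 1 of R^N: the least coordinate. *)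
definition idx1 :: "'n::{finite,linorder}" where
  "idx1 = Min UNIV"

(* Index (b,i,j): b = False means time 0,
   b = True means time t; (i,i) entries form xi_d, (i,j) with i<j form xi_u.
   D k = k-th derivative of r, q = rho^2. *)
definition Kcov :: "(nat \<Rightarrow> real \<Rightarrow> real) \<Rightarrow> real \<Rightarrow> (bool \<times> 'n::{finite,linorder} \<times> 'n) \<Rightarrow> (bool \<times> 'n \<times> 'n) \<Rightarrow> real" where
  "Kcov D \<rho> = (\<lambda>(b,i,j) (b',k,l).
     let i1 = (idx1::'n); q = \<rho>^2;
       r1 = D 1 q; r2 = D 2 q; r3 = D 3 q; r4 = D 4 q; r01 = D 1 0; r02 = D 2 0;
       a = 4*r2 + 8*q*r3; d = 12*r2 + 48*q*r3 + 16*q^2*r4;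
       den = r01^2 - (r1 + 2*r2*q)^2;
       Mm = (\<lambda>j k. if j = i1 \<and> k = i1 then (12*r2 + 8*q*r3)^2
                  else if j = i1 \<or> k = i1 then 4*r2*(12*r2 + 8*q*r3) else 16*r2^2);
       T = (\<lambda>j k. if j = i1 \<and> k = i1 then d else if j = i1 \<or> k = i1 then a
                  else if j = k then 12*r2 else 4*r2);
       G1 = (\<lambda>j k. 4*r02*(2*(if j = k then 1 else 0) + 1) + q*r01/(2*den) * Mm j k);
       G3 = (\<lambda>j k. T j k + q*(r1 + 2*r2*q)/(2*den) * Mm j k);
       G2 = (\<lambda>i j k l. if (i,j) \<noteq> (k,l) then 0
               else if i = i1 then 4*r02 + 8*q*r2^2*r01/(r01^2 - r1^2) else 4*r02);
       G4 = (\<lambda>i j k l. if (i,j) \<noteq> (k,l) then 0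
               else if i = i1 then a + 8*q*r2^2*r1/(r01^2 - r1^2) else 4*r2)
     in if i = j \<and> k = l then (if b = b' then G1 i k else G3 i k)
        else if i \<noteq> j \<and> k \<noteq> l then (if b = b' then G2 i j k l else G4 i j k l)
        else 0)"

end

theory Submission
  imports Defs
begin


lemma cg_meas: "centred_gaussian M W I K \<Longrightarrow> i \<in> I \<Longrightarrow> W i \<in> borel_measurable M"
  unfolding centred_gaussian_def by blast

lemma cg_char: "centred_gaussian M W I K \<Longrightarrow> finite F \<Longrightarrow> F \<subseteq> I \<Longrightarrow>
   (CLINT \<omega>|M. iexp (\<Sum>i\<in>F. c i * W i \<omega>))
          = complex_of_real (exp (- (\<Sum>i\<in>F. \<Sum>j\<in>F. c i * c j * K i j) / 2))"
  unfolding centred_gaussian_def by blast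

lemma gauss_var:
  assumes P: "prob_space M" and V[measurable]: "V \<in> borel_measurable M"
    and ch: "\<And>t. (CLINT \<omega>|M. iexp (t * V \<omega>)) = complex_of_real (exp (- (t*t*\<sigma>)/2))"
  shows "integrable M (\<lambda>\<omega>. (V \<omega>)^2) \<and> (LINT \<omega>|M. (V \<omega>)^2) = \<sigma>"
proof -
  interpret prob_space M by fact
  let ?D = "distr M borel V"
  have rD: "real_distribution ?D" by (rule real_distribution_distr) simp
  have chD: "char ?D t = complex_of_real (exp (- (t*t*\<sigma>)/2))" for t
    unfolding char_def using ch[of t] by (subst integral_distr) auto
  have "\<sigma> \<ge> 0"
  proof (rule ccontr)
    assume "\<not> \<sigma> \<ge> 0"
    hence "exp (- (1*1*\<sigma>)/2) > 1" by simp
    moreover have "norm (char ?D 1) \<le> 1" by (rule real_distribution.cmod_char_le_1[OF rD])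
    ultimately show False using chD[of 1] by simp
  qed
  define s where "s = sqrt \<sigma>"
  have s2: "s * s = \<sigma>" using \<open>\<sigma> \<ge> 0\<close> unfolding s_def by simp
  let ?N = "distr std_normal_distribution borel (\<lambda>x. s * x)"
  have rN: "real_distribution ?N"
    using prob_space.real_distribution_distr[OF real_distribution.axioms(1)[OF real_dist_normal_dist]]
    by simp
  have chN: "char ?N t = complex_of_real (exp (- (t*t*\<sigma>)/2))" for t
  proof -
    have "char ?N t = char std_normal_distribution (t * s)"
      unfolding char_def by (subst integral_distr) (auto simp: mult.assoc)
    also have "\<dots> = complex_of_real (exp (- (t*t*\<sigma>)/2))"
      by (simp add: char_std_normal_distribution power2_eq_square s2[symmetric] algebra_simps)
    finally show ?thesis .
  qed
  have eq: "?D = ?N" by (rule Levy_uniqueness[OF rD rN]) (auto simp: chD chN)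
  have i1: "integrable ?N (\<lambda>x. x^2)"
    by (subst integrable_distr_eq) (auto simp: power_mult_distrib intro!: integrable_mult_right integrable_std_normal_distribution_moment)
  have "integrable ?D (\<lambda>x. x^2)" using i1 eq by simp
  hence int: "integrable M (\<lambda>\<omega>. (V \<omega>)^2)" by (subst (asm) integrable_distr_eq) auto
  have "(LINT \<omega>|M. (V \<omega>)^2) = (LINT x|?D. x^2)" by (subst integral_distr) auto
  also have "\<dots> = (LINT x|?N. x^2)" using eq by simp
  also have "\<dots> = (LINT x|std_normal_distribution. s^2 * x^2)"
    by (subst integral_distr) (auto simp: power_mult_distrib)
  also have "\<dots> = s^2 * (LINT x|std_normal_distribution. x^(2*1))" by simp
  also have "\<dots> = \<sigma>" using std_normal_distribution_even_moments(1)[of 1] s2 by (simp add: power2_eq_square)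
  finally show ?thesis using int by simp
qed


lemma cg_mono: "centred_gaussian M W I K \<Longrightarrow> J \<subseteq> I \<Longrightarrow> centred_gaussian M W J K"
  unfolding centred_gaussian_def by blast

lemma cg_finite_union:
  assumes "\<And>F. finite F \<Longrightarrow> F \<subseteq> J \<Longrightarrow> centred_gaussian M W (I \<union> F) K"
  shows "centred_gaussian M W (I \<union> J) K"
  unfolding centred_gaussian_def
proof (intro conjI allI impI ballI)
  fix i assume "i \<in> I \<union> J"
  then show "W i \<in> borel_measurable M"
    using assms[of "{i} \<inter> J"] by (auto dest: cg_meas)
next
  fix F c assume "finite (F::'a set)" "F \<subseteq> I \<union> J"
  then show "(CLINT \<omega>|M. iexp (\<Sum>i\<in>F. c i * W i \<omega>))
          = complex_of_real (exp (- (\<Sum>i\<in>F. \<Sum>j\<in>F. c i * c j * K i j) / 2))"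
    using assms[of "F \<inter> J"] by (intro cg_char[of M W "I \<union> (F \<inter> J)"]) auto
qed

lemma cg_lin:
  assumes cg: "centred_gaussian M W I K" and G: "finite G" "g ` G \<subseteq> I"
  shows "(CLINT \<omega>|M. iexp (\<Sum>m\<in>G. \<beta> m * W (g m) \<omega>))
     = complex_of_real (exp (- (\<Sum>m\<in>G. \<Sum>m'\<in>G. \<beta> m * \<beta> m' * K (g m) (g m')) / 2))"
proof -
  define c where "c a = (\<Sum>m\<in>{x\<in>G. g x = a}. \<beta> m)" for a
  have e1: "(\<Sum>m\<in>G. \<beta> m * W (g m) \<omega>) = (\<Sum>a\<in>g`G. c a * W a \<omega>)" for \<omega>
    unfolding c_def sum_distrib_right
    by (subst sum.image_gen[OF G(1)]) (auto intro!: sum.cong)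
  have e2: "(\<Sum>m\<in>G. \<Sum>m'\<in>G. \<beta> m * \<beta> m' * K (g m) (g m'))
       = (\<Sum>a\<in>g`G. \<Sum>a'\<in>g`G. c a * c a' * K a a')"
  proof -
    have "(\<Sum>m\<in>G. \<Sum>m'\<in>G. \<beta> m * \<beta> m' * K (g m) (g m'))
        = (\<Sum>m\<in>G. \<beta> m * (\<Sum>a'\<in>g`G. c a' * K (g m) a'))"
      unfolding c_def sum_distrib_left sum_distrib_right
      by (subst sum.image_gen[OF G(1)]) (auto intro!: sum.cong simp: sum_distrib_left sum_distrib_right mult.assoc)
    also have "\<dots> = (\<Sum>a\<in>g`G. c a * (\<Sum>a'\<in>g`G. c a' * K a a'))"
      unfolding c_def
      by (subst sum.image_gen[OF G(1)]) (auto intro!: sum.cong simp: sum_distrib_right)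
    finally show ?thesis by (simp add: sum_distrib_left mult.assoc)
  qed
  show ?thesis unfolding e1 e2 using G by (intro cg_char[OF cg]) auto
qed

lemma sum4_swap:
  "(\<Sum>m\<in>G. \<Sum>m'\<in>G. \<Sum>n\<in>F. \<Sum>na\<in>F. c na * a na m * (c n * a n m') * (K m m'::real))
   = (\<Sum>i\<in>F. \<Sum>j\<in>F. \<Sum>n\<in>G. \<Sum>na\<in>G. c i * c j * (a i n * a j na * K n na))"
proof -
  let ?f = "\<lambda>m m' n na. c na * a na m * (c n * a n m') * K m m'"
  have "(\<Sum>m\<in>G. \<Sum>m'\<in>G. \<Sum>n\<in>F. \<Sum>na\<in>F. ?f m m' n na)
    = (\<Sum>m\<in>G. \<Sum>n\<in>F. \<Sum>m'\<in>G. \<Sum>na\<in>F. ?f m m' n na)"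
    by (rule sum.cong[OF refl], rule sum.swap)
  also have "\<dots> = (\<Sum>n\<in>F. \<Sum>m\<in>G. \<Sum>m'\<in>G. \<Sum>na\<in>F. ?f m m' n na)"
    by (rule sum.swap)
  also have "\<dots> = (\<Sum>n\<in>F. \<Sum>m\<in>G. \<Sum>na\<in>F. \<Sum>m'\<in>G. ?f m m' n na)"
    by (rule sum.cong[OF refl], rule sum.cong[OF refl], rule sum.swap)
  also have "\<dots> = (\<Sum>n\<in>F. \<Sum>na\<in>F. \<Sum>m\<in>G. \<Sum>m'\<in>G. ?f m m' n na)"
    by (rule sum.cong[OF refl], rule sum.swap)
  also have "\<dots> = (\<Sum>na\<in>F. \<Sum>n\<in>F. \<Sum>m\<in>G. \<Sum>m'\<in>G. ?f m m' n na)"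
    by (rule sum.swap)
  finally show ?thesis by (simp add: algebra_simps)
qed

lemma cg_image:
  assumes cg: "centred_gaussian M W I K" and G: "finite G" "g ` G \<subseteq> I"
    and xi: "\<And>q. q \<in> Q \<Longrightarrow> \<xi> q = (\<lambda>\<omega>. \<Sum>m\<in>G. a q m * W (g m) \<omega>)"
  shows "centred_gaussian M \<xi> Q (\<lambda>q q'. \<Sum>m\<in>G. \<Sum>m'\<in>G. a q m * a q' m' * K (g m) (g m'))"
  unfolding centred_gaussian_def
proof (intro conjI allI impI ballI)
  fix q assume q: "q \<in> Q"
  have [measurable]: "W (g m) \<in> borel_measurable M" if "m \<in> G" for m
    using cg G that by (auto intro: cg_meas)
  show "\<xi> q \<in> borel_measurable M" unfolding xi[OF q] by measurable
next
  fix F c assume F: "finite F" "F \<subseteq> Q"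
  define \<beta> where "\<beta> m = (\<Sum>q\<in>F. c q * a q m)" for m
  have "(\<Sum>q\<in>F. c q * \<xi> q \<omega>) = (\<Sum>m\<in>G. \<beta> m * W (g m) \<omega>)" for \<omega>
  proof -
    have "(\<Sum>q\<in>F. c q * \<xi> q \<omega>) = (\<Sum>q\<in>F. \<Sum>m\<in>G. c q * (a q m * W (g m) \<omega>))"
      using F xi by (auto simp: sum_distrib_left intro!: sum.cong)
    also have "\<dots> = (\<Sum>m\<in>G. \<Sum>q\<in>F. c q * (a q m * W (g m) \<omega>))" by (rule sum.swap)
    finally show ?thesis unfolding \<beta>_def by (simp add: sum_distrib_right mult.assoc)
  qed
  moreover have "(\<Sum>m\<in>G. \<Sum>m'\<in>G. \<beta> m * \<beta> m' * K (g m) (g m'))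
    = (\<Sum>i\<in>F. \<Sum>j\<in>F. c i * c j * (\<Sum>m\<in>G. \<Sum>m'\<in>G. a i m * a j m' * K (g m) (g m')))"
    unfolding \<beta>_def sum_distrib_left sum_distrib_right by (rule sum4_swap[where K="\<lambda>m m'. K (g m) (g m')"])
  ultimately show "(CLINT \<omega>|M. iexp (\<Sum>i\<in>F. c i * \<xi> i \<omega>)) =
       complex_of_real (exp (- (\<Sum>i\<in>F. \<Sum>j\<in>F. c i * c j *
          (\<Sum>m\<in>G. \<Sum>m'\<in>G. a i m * a j m' * K (g m) (g m'))) / 2))"
    using cg_lin[OF cg G, of \<beta>] by simp
qed

lemma cg_cov:
  assumes P: "prob_space M" and cg: "centred_gaussian M W I K" and ij: "i \<in> I" "j \<in> I"
  shows "integrable M (\<lambda>\<omega>. W i \<omega> * W j \<omega>) \<and> gcov M (W i) (W j) = (K i j + K j i) / 2"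
proof -
  have [measurable]: "W i \<in> borel_measurable M" "W j \<in> borel_measurable M"
    using ij cg by (auto intro: cg_meas)
  have var: "integrable M (\<lambda>\<omega>. (W k \<omega>)^2) \<and> (LINT \<omega>|M. (W k \<omega>)^2) = K k k" if k: "k \<in> I" for k
  proof (rule gauss_var[OF P])
    show "W k \<in> borel_measurable M" using k cg by (auto intro: cg_meas)
    fix t show "(CLINT \<omega>|M. iexp (t * W k \<omega>)) = complex_of_real (exp (- (t * t * K k k) / 2))"
      using cg_char[OF cg, of "{k}" "\<lambda>_. t"] k by simp
  qed
  show ?thesis
  proof (cases "i = j")
    case True then show ?thesis using var[OF ij(1)] by (simp add: gcov_def power2_eq_square)
  next
    case False
    have vs: "integrable M (\<lambda>\<omega>. (W i \<omega> + W j \<omega>)^2) \<and>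
      (LINT \<omega>|M. (W i \<omega> + W j \<omega>)^2) = K i i + K i j + K j i + K j j"
    proof (rule gauss_var[OF P])
      show "(\<lambda>\<omega>. W i \<omega> + W j \<omega>) \<in> borel_measurable M" by measurable
      fix t show "(CLINT \<omega>|M. iexp (t * (W i \<omega> + W j \<omega>))) =
          complex_of_real (exp (- (t * t * (K i i + K i j + K j i + K j j)) / 2))"
        using cg_char[OF cg, of "{i,j}" "\<lambda>_. t"] ij False by (simp add: algebra_simps)
    qed
    have eq: "(\<lambda>\<omega>. W i \<omega> * W j \<omega>) = (\<lambda>\<omega>. ((W i \<omega> + W j \<omega>)^2 - (W i \<omega>)^2 - (W j \<omega>)^2) / 2)"
      by (auto simp: power2_eq_square algebra_simps)
    have int: "integrable M (\<lambda>\<omega>. W i \<omega> * W j \<omega>)"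
      unfolding eq using vs var[OF ij(1)] var[OF ij(2)] by auto
    have "gcov M (W i) (W j) = ((LINT \<omega>|M. (W i \<omega> + W j \<omega>)^2) - (LINT \<omega>|M. (W i \<omega>)^2) - (LINT \<omega>|M. (W j \<omega>)^2)) / 2"
      unfolding gcov_def eq using vs var[OF ij(1)] var[OF ij(2)] by simp
    then show ?thesis using int vs var[OF ij(1)] var[OF ij(2)] by simp
  qed
qed


lemma cg_add:
  assumes P: "prob_space M"
    and cg: "centred_gaussian M W A K"
    and sym: "\<And>a b. K a b = K b a"
    and k: "k \<notin> A"
    and G: "finite G" "\<And>n. g n ` G \<subseteq> A"
    and conv: "\<And>\<omega>. \<omega> \<in> space M \<Longrightarrow> (\<lambda>n. \<Sum>m\<in>G. \<alpha> n m * W (g n m) \<omega>) \<longlonglongrightarrow> W k \<omega>"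
    and cross: "\<And>b. b \<in> A \<Longrightarrow> (\<lambda>n. \<Sum>m\<in>G. \<alpha> n m * K (g n m) b) \<longlonglongrightarrow> K k b"
    and var: "(\<lambda>n. \<Sum>m\<in>G. \<Sum>m'\<in>G. \<alpha> n m * \<alpha> n m' * K (g n m) (g n m')) \<longlonglongrightarrow> K k k"
  shows "centred_gaussian M W (insert k A) K"
proof -
  interpret prob_space M by fact
  have mW[measurable]: "W a \<in> borel_measurable M" if "a \<in> A" for a using cg that by (rule cg_meas)
  have mv: "(\<lambda>\<omega>. \<Sum>m\<in>G. \<alpha> n m * W (g n m) \<omega>) \<in> borel_measurable M" for n
    using G by (intro borel_measurable_sum borel_measurable_times borel_measurable_const mW) auto
  have mWg: "\<And>n m. m \<in> G \<Longrightarrow> W (g n m) \<in> borel_measurable M" using G(2) mW by blast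
  have mk[measurable]: "W k \<in> borel_measurable M"
    by (rule borel_measurable_LIMSEQ_real[OF conv mv])
  show ?thesis
    unfolding centred_gaussian_def
  proof (intro conjI allI impI ballI)
    fix i assume "i \<in> insert k A" then show "W i \<in> borel_measurable M" using mk mW by auto
  next
    fix F c assume F: "finite F" "F \<subseteq> insert k A"
    show "(CLINT \<omega>|M. iexp (\<Sum>i\<in>F. c i * W i \<omega>)) =
          complex_of_real (exp (- (\<Sum>i\<in>F. \<Sum>j\<in>F. c i * c j * K i j) / 2))"
    proof (cases "k \<in> F")
      case False then show ?thesis using F by (intro cg_char[OF cg]) auto
    next
      case True
      define F' where "F' = F - {k}"
      have F': "finite F'" "F' \<subseteq> A" "k \<notin> F'" "F = insert k F'" using F True k unfolding F'_def by auto
      define g' where "g' n x = (case x of Inl m \<Rightarrow> g n m | Inr b \<Rightarrow> b)" for n x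
      define \<beta> where "\<beta> n x = (case x of Inl m \<Rightarrow> c k * \<alpha> n m | Inr b \<Rightarrow> c b)" for n x
      define S where "S n \<omega> = (\<Sum>x\<in>G <+> F'. \<beta> n x * W (g' n x) \<omega>)" for n \<omega>
      define Q where "Q n = (\<Sum>x\<in>G <+> F'. \<Sum>y\<in>G <+> F'. \<beta> n x * \<beta> n y * K (g' n x) (g' n y))" for n
      have fin: "finite (G <+> F')" using G F' by auto
      have img: "g' n ` (G <+> F') \<subseteq> A" for n using G(2)[of n] F' unfolding g'_def by auto
      have S_eq: "S n \<omega> = c k * (\<Sum>m\<in>G. \<alpha> n m * W (g n m) \<omega>) + (\<Sum>b\<in>F'. c b * W b \<omega>)" for n \<omega>
        unfolding S_def using G F' by (simp add: sum.Plus g'_def \<beta>_def sum_distrib_left mult.assoc)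
      have chS: "(CLINT \<omega>|M. iexp (S n \<omega>)) = complex_of_real (exp (- Q n / 2))" for n
        unfolding S_def Q_def by (rule cg_lin[OF cg fin img])
      define V where "V n = (\<Sum>m\<in>G. \<Sum>m'\<in>G. \<alpha> n m * \<alpha> n m' * K (g n m) (g n m'))" for n
      define X where "X n b = (\<Sum>m\<in>G. \<alpha> n m * K (g n m) b)" for n b
      have Q_eq: "Q n = c k * c k * V n + 2 * c k * (\<Sum>b\<in>F'. c b * X n b) + (\<Sum>b\<in>F'. \<Sum>b'\<in>F'. c b * c b' * K b b')" for n
      proof -
        have "Q n = (\<Sum>m\<in>G. \<Sum>m'\<in>G. c k * \<alpha> n m * (c k * \<alpha> n m') * K (g n m) (g n m'))
           + (\<Sum>m\<in>G. \<Sum>b\<in>F'. c k * \<alpha> n m * c b * K (g n m) b)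
           + ((\<Sum>b\<in>F'. \<Sum>m\<in>G. c b * (c k * \<alpha> n m) * K b (g n m))
           + (\<Sum>b\<in>F'. \<Sum>b'\<in>F'. c b * c b' * K b b'))"
          unfolding Q_def using G F' by (simp add: sum.Plus g'_def \<beta>_def sum.distrib)
        also have "(\<Sum>m\<in>G. \<Sum>m'\<in>G. c k * \<alpha> n m * (c k * \<alpha> n m') * K (g n m) (g n m')) = c k * c k * V n"
          unfolding V_def by (simp add: sum_distrib_left algebra_simps)
        also have "(\<Sum>m\<in>G. \<Sum>b\<in>F'. c k * \<alpha> n m * c b * K (g n m) b) = c k * (\<Sum>b\<in>F'. c b * X n b)"
          unfolding X_def by (subst sum.swap) (simp add: sum_distrib_left algebra_simps)
        also have "(\<Sum>b\<in>F'. \<Sum>m\<in>G. c b * (c k * \<alpha> n m) * K b (g n m)) = c k * (\<Sum>b\<in>F'. c b * X n b)"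
          unfolding X_def by (simp add: sum_distrib_left algebra_simps sym[of _ "g n _"])
        finally show ?thesis by simp
      qed
      have limQ: "Q \<longlonglongrightarrow> c k * c k * K k k + 2 * c k * (\<Sum>b\<in>F'. c b * K k b) + (\<Sum>b\<in>F'. \<Sum>b'\<in>F'. c b * c b' * K b b')"
        unfolding Q_eq V_def X_def using F'(2)
        by (intro tendsto_intros var cross) auto
      have target: "(\<Sum>i\<in>F. \<Sum>j\<in>F. c i * c j * K i j) = c k * c k * K k k + 2 * c k * (\<Sum>b\<in>F'. c b * K k b) + (\<Sum>b\<in>F'. \<Sum>b'\<in>F'. c b * c b' * K b b')"
      proof -
        have "(\<Sum>i\<in>F. \<Sum>j\<in>F. c i * c j * K i j) = c k * c k * K k k + (\<Sum>j\<in>F'. c k * c j * K k j)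
           + ((\<Sum>i\<in>F'. c i * c k * K i k) + (\<Sum>i\<in>F'. \<Sum>j\<in>F'. c i * c j * K i j))"
          unfolding F'(4) by (simp add: sum.insert[OF F'(1) F'(3)] sum.distrib)
        moreover have "(\<Sum>i\<in>F'. c i * c k * K i k) = c k * (\<Sum>b\<in>F'. c b * K k b)"
          by (simp add: sum_distrib_left sym[of _ k] algebra_simps)
        moreover have "(\<Sum>j\<in>F'. c k * c j * K k j) = c k * (\<Sum>b\<in>F'. c b * K k b)"
          by (simp add: sum_distrib_left algebra_simps)
        ultimately show ?thesis by simp
      qed
      have lim1: "(\<lambda>n. CLINT \<omega>|M. iexp (S n \<omega>)) \<longlonglongrightarrow> (CLINT \<omega>|M. iexp (\<Sum>i\<in>F. c i * W i \<omega>))"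
      proof (rule integral_dominated_convergence[where w="\<lambda>_. 1"])
        show "(\<lambda>\<omega>. iexp (\<Sum>i\<in>F. c i * W i \<omega>)) \<in> borel_measurable M"
          using F mk mW by (intro borel_measurable_continuous_on[where f="\<lambda>x. iexp x"] borel_measurable_sum borel_measurable_times) (auto intro!: continuous_intros)
        show "(\<lambda>\<omega>. iexp (S n \<omega>)) \<in> borel_measurable M" for n
          unfolding S_eq using F' G mk mW mv mWg
          by (intro borel_measurable_continuous_on[where f="\<lambda>x. iexp x"] borel_measurable_sum borel_measurable_times borel_measurable_add) (auto intro!: continuous_intros)
        show "integrable M (\<lambda>_. 1::real)" by simp
        show "AE \<omega> in M. (\<lambda>n. iexp (S n \<omega>)) \<longlonglongrightarrow> iexp (\<Sum>i\<in>F. c i * W i \<omega>)"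
        proof (rule AE_I2)
          fix \<omega> assume "\<omega> \<in> space M"
          hence "(\<lambda>n. S n \<omega>) \<longlonglongrightarrow> c k * W k \<omega> + (\<Sum>b\<in>F'. c b * W b \<omega>)"
            unfolding S_eq by (intro tendsto_intros conv)
          moreover have "c k * W k \<omega> + (\<Sum>b\<in>F'. c b * W b \<omega>) = (\<Sum>i\<in>F. c i * W i \<omega>)"
            using F' by simp
          ultimately show "(\<lambda>n. iexp (S n \<omega>)) \<longlonglongrightarrow> iexp (\<Sum>i\<in>F. c i * W i \<omega>)"
            by (intro tendsto_intros) auto
        qed
        show "AE \<omega> in M. norm (iexp (S n \<omega>)) \<le> 1" for n
          by (simp add: norm_exp_i_times)
      qed
      have lim2: "(\<lambda>n. CLINT \<omega>|M. iexp (S n \<omega>)) \<longlonglongrightarrow> complex_of_real (exp (- (\<Sum>i\<in>F. \<Sum>j\<in>F. c i * c j * K i j) / 2))"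
        unfolding chS target by (intro tendsto_intros limQ) simp
      show ?thesis using LIMSEQ_unique[OF lim1 lim2] .
    qed
  qed
qed


datatype ('n::finite) idx = Pt "real^'n" | D1 "real^'n" 'n | D2 "real^'n" 'n 'n

definition dl :: "'n \<Rightarrow> 'n \<Rightarrow> real" where "dl i j = (if i = j then 1 else 0)"

definition "k00 r (\<tau>::real^'n) = r 0 (norm \<tau>^2)"
definition "k10 r i (\<tau>::real^'n) = 2 * r 1 (norm \<tau>^2) * \<tau>$i"
definition "k11 r i j (\<tau>::real^'n) = -4 * r 2 (norm \<tau>^2) * \<tau>$i * \<tau>$j - 2 * r 1 (norm \<tau>^2) * dl i j"
definition "k21 r i j k (\<tau>::real^'n) = -8 * r 3 (norm \<tau>^2) * \<tau>$i * \<tau>$j * \<tau>$k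
   - 4 * r 2 (norm \<tau>^2) * (dl i j * \<tau>$k + dl i k * \<tau>$j + dl j k * \<tau>$i)"
definition "k22 r i j k l (\<tau>::real^'n) = 16 * r 4 (norm \<tau>^2) * \<tau>$i * \<tau>$j * \<tau>$k * \<tau>$l
   + 8 * r 3 (norm \<tau>^2) * (dl i j * \<tau>$k * \<tau>$l + dl i k * \<tau>$j * \<tau>$l + dl i l * \<tau>$j * \<tau>$k
        + dl j k * \<tau>$i * \<tau>$l + dl j l * \<tau>$i * \<tau>$k + dl k l * \<tau>$i * \<tau>$j)
   + 4 * r 2 (norm \<tau>^2) * (dl i j * dl k l + dl i k * dl j l + dl i l * dl j k)"

fun Kf :: "(nat \<Rightarrow> real \<Rightarrow> real) \<Rightarrow> ('n::finite) idx \<Rightarrow> 'n idx \<Rightarrow> real" where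
  "Kf r (Pt x) (Pt y) = k00 r (x - y)"
| "Kf r (D1 x i) (Pt y) = k10 r i (x - y)"
| "Kf r (Pt x) (D1 y j) = - k10 r j (x - y)"
| "Kf r (D1 x i) (D1 y j) = k11 r i j (x - y)"
| "Kf r (D2 x i j) (D1 y k) = k21 r i j k (x - y)"
| "Kf r (D1 x k) (D2 y i j) = - k21 r i j k (x - y)"
| "Kf r (D2 x i j) (D2 y k l) = k22 r i j k l (x - y)"
| "Kf r (Pt x) (D2 y i j) = 0"
| "Kf r (D2 x i j) (Pt y) = 0"

lemma dl_sym: "dl i j = dl j i" by (simp add: dl_def)

lemma Kf_sym: "Kf r a b = Kf r b a"
proof -
  have n: "norm (y - x) = norm (x - y)" for x y :: "real^'n" by (rule norm_minus_commute)
  have c: "(y - x) $ i = - ((x - y) $ i)" for x y :: "real^'n" and i by simp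
  show ?thesis
    by (cases a; cases b) (auto simp: k00_def k10_def k11_def k21_def k22_def n c dl_sym algebra_simps)
qed

lemma norm_axis_sq: "norm (\<tau> + h *\<^sub>R axis i (1::real))^2 = norm (\<tau>::real^'n)^2 + 2*h*\<tau>$i + h^2"
  unfolding power2_norm_eq_inner
  by (simp add: inner_add_left inner_add_right inner_axis inner_axis' power2_eq_square algebra_simps)

lemma comp_der: "D = dl i m \<Longrightarrow> ((\<lambda>h. (\<tau> + h *\<^sub>R axis i (1::real)) $ m) has_real_derivative D) (at 0)"
  by (auto simp: dl_def axis_def intro!: derivative_eq_intros)

lemma rder:
  assumes dr: "\<forall>k<4. \<forall>x\<ge>0. (r k has_real_derivative r (Suc k) x) (at x within {0..})"
    and k: "k < 4" and D: "D = r (Suc k) (norm \<tau>^2) * (2 * \<tau>$i)"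
  shows "((\<lambda>h. r k (norm (\<tau> + h *\<^sub>R axis i (1::real))^2)) has_real_derivative D) (at 0)"
proof -
  let ?g = "\<lambda>h. norm (\<tau> + h *\<^sub>R axis i (1::real))^2"
  have g: "(?g has_real_derivative 2 * \<tau>$i) (at 0)"
    unfolding norm_axis_sq by (auto intro!: derivative_eq_intros)
  have "(r k has_real_derivative r (Suc k) (?g 0)) (at (?g 0) within {0..})"
    using dr k by simp
  hence "(r k has_real_derivative r (Suc k) (?g 0)) (at (?g 0) within (?g ` UNIV))"
    by (rule has_field_derivative_subset) auto
  from DERIV_image_chain[OF this g] show ?thesis using D by (simp add: o_def mult.commute)
qed


context
  fixes r :: "nat \<Rightarrow> real \<Rightarrow> real"
  assumes dr: "\<forall>k<4. \<forall>x\<ge>0. (r k has_real_derivative r (Suc k) x) (at x within {0..})"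
begin

lemmas rd = rder[OF dr]

lemma der_a: "((\<lambda>h. k00 r (\<tau> + h *\<^sub>R axis i 1)) has_real_derivative k10 r i \<tau>) (at 0)"
  unfolding k00_def k10_def
  by (rule rd) (auto simp: algebra_simps)

lemma der_b: "((\<lambda>h. - k10 r j (\<tau> + h *\<^sub>R axis i 1)) has_real_derivative k11 r i j \<tau>) (at 0)"
  unfolding k10_def k11_def
  by (rule derivative_eq_intros rd comp_der refl | simp)+ (simp add: algebra_simps numeral_2_eq_2)

lemma der_c: "((\<lambda>h. k11 r j k (\<tau> + h *\<^sub>R axis i 1)) has_real_derivative k21 r i j k \<tau>) (at 0)"
  unfolding k11_def k21_def
  by (rule derivative_eq_intros rd comp_der refl | simp)+ (simp add: algebra_simps numeral_2_eq_2)

lemma der_d: "((\<lambda>h. - k21 r k l j (\<tau> + h *\<^sub>R axis i 1)) has_real_derivative k22 r i j k l \<tau>) (at 0)"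
  unfolding k21_def k22_def
  by (rule derivative_eq_intros rd comp_der refl | simp)+ (simp add: algebra_simps dl_sym[of k j] dl_sym[of l j])

end


definition hseq :: "nat \<Rightarrow> real" where "hseq n = 1 / real (Suc n)"

lemma hseq_pos: "hseq n > 0" by (simp add: hseq_def)

lemma hseq_at: "filterlim hseq (at 0 within {0<..}) sequentially"
proof -
  have "hseq \<longlonglongrightarrow> 0" unfolding hseq_def using LIMSEQ_inverse_real_of_nat by (simp add: inverse_eq_divide)
  moreover have "\<forall>n. hseq n \<in> {0<..} \<and> hseq n \<noteq> 0" using hseq_pos by (metis greaterThan_iff less_irrefl)
  ultimately show ?thesis by (auto simp: filterlim_at intro: always_eventually)
qed

lemma hseq_at': "filterlim hseq (at 0) sequentially"
  using hseq_at by (rule filterlim_mono) (auto simp: at_le)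

lemma hseq2_at: "filterlim (\<lambda>n. (hseq n)^2) (at 0 within {0..}) sequentially"
proof -
  have "hseq \<longlonglongrightarrow> 0" unfolding hseq_def using LIMSEQ_inverse_real_of_nat by (simp add: inverse_eq_divide)
  hence "(\<lambda>n. (hseq n)^2) \<longlonglongrightarrow> 0" by (metis power_zero_numeral tendsto_power zero_neq_numeral)
  moreover have "\<forall>n. (hseq n)^2 \<in> {0..} \<and> (hseq n)^2 \<noteq> 0" by (simp add: hseq_def)
  ultimately show ?thesis by (auto simp: filterlim_at intro: always_eventually)
qed

lemma dq_lim:
  assumes "(f has_real_derivative D) (at 0)"
  shows "(\<lambda>n. (f (hseq n) - f 0) / hseq n) \<longlonglongrightarrow> D"
proof -
  have "((\<lambda>y. (f y - f 0) / (y - 0)) \<longlongrightarrow> D) (at 0)" using assms by (simp add: has_field_derivative_iff)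
  from filterlim_compose[OF this hseq_at'] show ?thesis by simp
qed

lemma dq_lim2:
  assumes "(f has_real_derivative D) (at 0 within {0..})"
  shows "(\<lambda>n. (f ((hseq n)^2) - f 0) / (hseq n)^2) \<longlonglongrightarrow> D"
proof -
  have "((\<lambda>y. (f y - f 0) / (y - 0)) \<longlongrightarrow> D) (at 0 within {0..})" using assms by (simp add: has_field_derivative_iff)
  from filterlim_compose[OF this hseq2_at] show ?thesis by simp
qed

lemma cont_lim2:
  assumes "(f has_real_derivative D) (at 0 within {0..})"
  shows "(\<lambda>n. f ((hseq n)^2)) \<longlonglongrightarrow> f 0"
proof -
  have "continuous (at 0 within {0..}) f" using assms by (rule DERIV_continuous)
  hence "(f \<longlongrightarrow> f 0) (at 0 within {0..})" by (simp add: continuous_within)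
  from filterlim_compose[OF this hseq2_at] show ?thesis by simp
qed

lemma sum_bool2: "(\<Sum>m\<in>UNIV. (if m then 1 else -1) / h * f m) = (f True - f False) / (h::real)"
  by (simp add: UNIV_bool diff_divide_distrib)

lemma sum_bool22: "h \<noteq> 0 \<Longrightarrow> (\<Sum>m\<in>UNIV. \<Sum>m'\<in>UNIV. (if m then 1 else -1) / h * ((if m' then 1 else -1) / h) * f m m')
   = (f True True - f True False - f False True + f False False) / (h::real)^2"
  by (simp add: UNIV_bool power2_eq_square) (simp add: field_simps)

lemma cg_reindex:
  assumes cg: "centred_gaussian M W J K" and inj: "inj_on g J"
    and V: "\<And>j. j \<in> J \<Longrightarrow> V (g j) = W j"
    and K': "\<And>j j'. j \<in> J \<Longrightarrow> j' \<in> J \<Longrightarrow> K' (g j) (g j') = K j j'"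
  shows "centred_gaussian M V (g ` J) K'"
  unfolding centred_gaussian_def
proof (intro conjI allI impI ballI)
  fix i assume "i \<in> g ` J" then show "V i \<in> borel_measurable M" using V cg_meas[OF cg] by auto
next
  fix F c assume F: "finite F" "F \<subseteq> g ` J"
  define F0 where "F0 = {j\<in>J. g j \<in> F}"
  have FF: "F = g ` F0" using F unfolding F0_def by auto
  have inj0: "inj_on g F0" using inj unfolding F0_def by (auto intro: inj_on_subset)
  have fin0: "finite F0" using F(1) FF inj0 finite_image_iff by fastforce
  have sub0: "F0 \<subseteq> J" unfolding F0_def by auto
  have "(\<Sum>i\<in>F. c i * V i \<omega>) = (\<Sum>j\<in>F0. c (g j) * W j \<omega>)" for \<omega>
    unfolding FF using inj0 sub0 V by (simp add: sum.reindex subset_iff)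
  moreover have "(\<Sum>i\<in>F. \<Sum>j\<in>F. c i * c j * K' i j) = (\<Sum>i\<in>F0. \<Sum>j\<in>F0. c (g i) * c (g j) * K i j)"
    unfolding FF using inj0 sub0 K' by (simp add: sum.reindex subset_iff)
  ultimately show "(CLINT \<omega>|M. iexp (\<Sum>i\<in>F. c i * V i \<omega>)) =
          complex_of_real (exp (- (\<Sum>i\<in>F. \<Sum>j\<in>F. c i * c j * K' i j) / 2))"
    using cg_char[OF cg fin0 sub0, of "\<lambda>j. c (g j)"] by simp
qed


definition Uf :: "(real^'n::finite \<Rightarrow> 'a \<Rightarrow> real) \<Rightarrow> 'n idx \<Rightarrow> 'a \<Rightarrow> real" where
  "Uf X a \<omega> = (case a of Pt s \<Rightarrow> X s \<omega> | D1 s i \<Rightarrow> partial i (\<lambda>s. X s \<omega>) s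
      | D2 s i j \<Rightarrow> partial i (partial j (\<lambda>s. X s \<omega>)) s)"

definition "DS1 = {D1 s i | s i. True}"
definition "DS2 = {D2 s i j | s i j. True}"

lemma axis_comp: "(h *\<^sub>R axis i (1::real)) $ j = h * dl i j"
  by (simp add: axis_def dl_def)

lemma axis_nth_dl: "axis i (1::real) $ j = dl i j" by (simp add: axis_def dl_def)

lemma norm_axis2: "norm (h *\<^sub>R axis i (1::real))^2 = h^2"
  by (simp add: power2_eq_square)

lemma shift_eq: "s + h *\<^sub>R v - y = (s - y) + h *\<^sub>R (v::real^'n)" by (simp add: algebra_simps)

context
  fixes M :: "'a measure" and X :: "real^'n::finite \<Rightarrow> 'a \<Rightarrow> real" and r :: "nat \<Rightarrow> real \<Rightarrow> real"
  assumes P: "prob_space M"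
    and gauss: "centred_gaussian M X UNIV (\<lambda>s t. r 0 ((norm (s - t))^2))"
    and paths: "\<forall>\<omega>\<in>space M. C2_fun (\<lambda>s. X s \<omega>)"
    and dr: "\<forall>k<4. \<forall>x\<ge>0. (r k has_real_derivative r (Suc k) x) (at x within {0..})"
begin

lemma base: "centred_gaussian M (Uf X) (range Pt) (Kf r)"
  by (rule cg_reindex[OF gauss]) (auto simp: Uf_def k00_def inj_on_def)

lemma stage1_step:
  assumes cg: "centred_gaussian M (Uf X) A (Kf r)" and k: "D1 s i \<notin> A"
    and ptA: "range Pt \<subseteq> A"
    and A: "\<And>b. b \<in> A \<Longrightarrow> (\<exists>y. b = Pt y) \<or> (\<exists>y j. b = D1 y j)"
  shows "centred_gaussian M (Uf X) (insert (D1 s i) A) (Kf r)"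
proof (rule cg_add[OF P cg Kf_sym k, where G=UNIV and
    g="\<lambda>n m. if m then Pt (s + hseq n *\<^sub>R axis i 1) else Pt s" and
    \<alpha>="\<lambda>n m. (if m then 1 else -1) / hseq n"])
  show "finite (UNIV :: bool set)" by simp
  show "(\<lambda>m. if m then Pt (s + hseq n *\<^sub>R axis i 1) else Pt s) ` UNIV \<subseteq> A" for n
    using ptA by auto
next
  fix \<omega> assume \<omega>: "\<omega> \<in> space M"
  have d: "((\<lambda>h. X (s + h *\<^sub>R axis i 1) \<omega>) has_real_derivative Uf X (D1 s i) \<omega>) (at 0)"
    using paths \<omega> unfolding C2_fun_def Uf_def by auto
  show "(\<lambda>n. \<Sum>m\<in>UNIV. (if m then 1 else -1) / hseq n *
          Uf X (if m then Pt (s + hseq n *\<^sub>R axis i 1) else Pt s) \<omega>) \<longlonglongrightarrow> Uf X (D1 s i) \<omega>"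
    unfolding sum_bool2 using dq_lim[OF d] by (simp add: Uf_def)
next
  fix b assume b: "b \<in> A"
  show "(\<lambda>n. \<Sum>m\<in>UNIV. (if m then 1 else -1) / hseq n *
          Kf r (if m then Pt (s + hseq n *\<^sub>R axis i 1) else Pt s) b) \<longlonglongrightarrow> Kf r (D1 s i) b"
    unfolding sum_bool2
  proof -
    consider y where "b = Pt y" | y j where "b = D1 y j" using A[OF b] by blast
    then show "(\<lambda>n. (Kf r (if True then Pt (s + hseq n *\<^sub>R axis i 1) else Pt s) b
        - Kf r (if False then Pt (s + hseq n *\<^sub>R axis i 1) else Pt s) b) / hseq n) \<longlonglongrightarrow> Kf r (D1 s i) b"
    proof cases
      case 1
      show ?thesis using dq_lim[OF der_a[OF dr, of "s - y" i]] by (simp add: 1 shift_eq)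
    next
      case 2
      show ?thesis using dq_lim[OF der_b[OF dr, of j "s - y" i]] by (simp add: 2 shift_eq)
    qed
  qed
next
  have e: "(\<Sum>m\<in>UNIV. \<Sum>m'\<in>UNIV. (if m then 1 else -1) / hseq n * ((if m' then 1 else -1) / hseq n) *
          Kf r (if m then Pt (s + hseq n *\<^sub>R axis i 1) else Pt s) (if m' then Pt (s + hseq n *\<^sub>R axis i 1) else Pt s))
        = -2 * ((r 0 ((hseq n)^2) - r 0 0) / (hseq n)^2)" for n
    using hseq_pos[of n]
    by (subst sum_bool22) (auto simp: k00_def norm_axis2 field_simps)
  have l: "(\<lambda>n. (r 0 ((hseq n)^2) - r 0 0) / (hseq n)^2) \<longlonglongrightarrow> r 1 0"
    by (rule dq_lim2) (use dr in auto)
  show "(\<lambda>n. \<Sum>m\<in>UNIV. \<Sum>m'\<in>UNIV. (if m then 1 else -1) / hseq n * ((if m' then 1 else -1) / hseq n) *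
          Kf r (if m then Pt (s + hseq n *\<^sub>R axis i 1) else Pt s) (if m' then Pt (s + hseq n *\<^sub>R axis i 1) else Pt s))
        \<longlonglongrightarrow> Kf r (D1 s i) (D1 s i)"
    unfolding e using tendsto_mult[OF tendsto_const l, of "-2"] by (simp add: k11_def dl_def)
qed

lemma stage2_step:
  assumes cg: "centred_gaussian M (Uf X) A (Kf r)" and k: "D2 s i j \<notin> A"
    and dA: "DS1 \<subseteq> A"
    and A: "\<And>b. b \<in> A \<Longrightarrow> (\<exists>y k. b = D1 y k) \<or> (\<exists>y k l. b = D2 y k l)"
  shows "centred_gaussian M (Uf X) (insert (D2 s i j) A) (Kf r)"
proof (rule cg_add[OF P cg Kf_sym k, where G=UNIV and
    g="\<lambda>n m. if m then D1 (s + hseq n *\<^sub>R axis i 1) j else D1 s j" and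
    \<alpha>="\<lambda>n m. (if m then 1 else -1) / hseq n"])
  show "finite (UNIV :: bool set)" by simp
  show "(\<lambda>m. if m then D1 (s + hseq n *\<^sub>R axis i 1) j else D1 s j) ` UNIV \<subseteq> A" for n
    using dA by (auto simp: DS1_def)
next
  fix \<omega> assume \<omega>: "\<omega> \<in> space M"
  have d: "((\<lambda>h. partial j (\<lambda>s. X s \<omega>) (s + h *\<^sub>R axis i 1)) has_real_derivative Uf X (D2 s i j) \<omega>) (at 0)"
    using paths \<omega> unfolding C2_fun_def Uf_def by auto
  show "(\<lambda>n. \<Sum>m\<in>UNIV. (if m then 1 else -1) / hseq n *
          Uf X (if m then D1 (s + hseq n *\<^sub>R axis i 1) j else D1 s j) \<omega>) \<longlonglongrightarrow> Uf X (D2 s i j) \<omega>"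
    unfolding sum_bool2 using dq_lim[OF d] by (simp add: Uf_def)
next
  fix b assume b: "b \<in> A"
  show "(\<lambda>n. \<Sum>m\<in>UNIV. (if m then 1 else -1) / hseq n *
          Kf r (if m then D1 (s + hseq n *\<^sub>R axis i 1) j else D1 s j) b) \<longlonglongrightarrow> Kf r (D2 s i j) b"
    unfolding sum_bool2
  proof -
    consider y k where "b = D1 y k" | y k l where "b = D2 y k l" using A[OF b] by blast
    then show "(\<lambda>n. (Kf r (if True then D1 (s + hseq n *\<^sub>R axis i 1) j else D1 s j) b
        - Kf r (if False then D1 (s + hseq n *\<^sub>R axis i 1) j else D1 s j) b) / hseq n) \<longlonglongrightarrow> Kf r (D2 s i j) b"
    proof cases
      case 1
      show ?thesis using dq_lim[OF der_c[OF dr, of j k "s - y" i]] by (simp add: 1 shift_eq)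
    next
      case 2
      show ?thesis using dq_lim[OF der_d[OF dr, of k l j "s - y" i]] by (simp add: 2 shift_eq)
    qed
  qed
next
  have e: "(\<Sum>m\<in>UNIV. \<Sum>m'\<in>UNIV. (if m then 1 else -1) / hseq n * ((if m' then 1 else -1) / hseq n) *
          Kf r (if m then D1 (s + hseq n *\<^sub>R axis i 1) j else D1 s j) (if m' then D1 (s + hseq n *\<^sub>R axis i 1) j else D1 s j))
        = 8 * r 2 ((hseq n)^2) * (dl i j)^2 + 4 * ((r 1 ((hseq n)^2) - r 1 0) / (hseq n)^2)" for n
    using hseq_pos[of n]
    by (subst sum_bool22) (auto simp: k11_def norm_axis2 axis_comp field_simps power2_eq_square dl_def axis_nth_dl)
  have l: "(\<lambda>n. (r 1 ((hseq n)^2) - r 1 0) / (hseq n)^2) \<longlonglongrightarrow> r 2 0"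
    by (rule dq_lim2) (use dr in \<open>auto simp: numeral_2_eq_2\<close>)
  have l2: "(\<lambda>n. r 2 ((hseq n)^2)) \<longlonglongrightarrow> r 2 0"
  proof (rule cont_lim2)
    show "(r 2 has_real_derivative r 3 0) (at 0 within {0..})" using dr by (auto simp: numeral_3_eq_3 numeral_2_eq_2)
  qed
  show "(\<lambda>n. \<Sum>m\<in>UNIV. \<Sum>m'\<in>UNIV. (if m then 1 else -1) / hseq n * ((if m' then 1 else -1) / hseq n) *
          Kf r (if m then D1 (s + hseq n *\<^sub>R axis i 1) j else D1 s j) (if m' then D1 (s + hseq n *\<^sub>R axis i 1) j else D1 s j))
        \<longlonglongrightarrow> Kf r (D2 s i j) (D2 s i j)"
  proof -
    have "Kf r (D2 s i j) (D2 s i j) = 8 * r 2 0 * (dl i j)^2 + 4 * r 2 0"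
      by (simp add: k22_def dl_def)
    then show ?thesis unfolding e
      using tendsto_add[OF tendsto_mult[OF tendsto_mult[OF tendsto_const l2] tendsto_const] tendsto_mult[OF tendsto_const l],
        of 8 "(dl i j)^2" 4] by simp
  qed
qed

lemma stage1: "centred_gaussian M (Uf X) (range Pt \<union> DS1) (Kf r)"
proof (rule cg_finite_union)
  fix F :: "'n idx set" assume "finite F" "F \<subseteq> DS1"
  then show "centred_gaussian M (Uf X) (range Pt \<union> F) (Kf r)"
  proof (induction F rule: finite_induct)
    case empty then show ?case using base by simp
  next
    case (insert x F)
    then obtain s i where x: "x = D1 s i" by (auto simp: DS1_def)
    have "centred_gaussian M (Uf X) (insert (D1 s i) (range Pt \<union> F)) (Kf r)"
      by (rule stage1_step) (use insert x in \<open>auto simp: DS1_def\<close>)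
    then show ?case using x by simp
  qed
qed

lemma stage2: "centred_gaussian M (Uf X) (DS1 \<union> DS2) (Kf r)"
proof (rule cg_finite_union)
  fix F :: "'n idx set" assume "finite F" "F \<subseteq> DS2"
  then show "centred_gaussian M (Uf X) (DS1 \<union> F) (Kf r)"
  proof (induction F rule: finite_induct)
    case empty then show ?case using cg_mono[OF stage1] by simp
  next
    case (insert x F)
    then obtain s i j where x: "x = D2 s i j" by (auto simp: DS2_def)
    have "centred_gaussian M (Uf X) (insert (D2 s i j) (DS1 \<union> F)) (Kf r)"
      by (rule stage2_step) (use insert x in \<open>auto simp: DS1_def DS2_def\<close>)
    then show ?case using x by simp
  qed
qed

end


lemma sum_bool_prod: "(\<Sum>p\<in>(UNIV::(bool\<times>'n::finite) set). f p) = (\<Sum>k\<in>UNIV. f (False,k) + f (True,k))"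
proof -
  have "(\<Sum>p\<in>(UNIV::(bool\<times>'n) set). f p) = (\<Sum>p\<in>UNIV \<times> UNIV. f p)" by simp
  also have "\<dots> = (\<Sum>b\<in>UNIV. \<Sum>k\<in>UNIV. f (b,k))" by (subst sum.cartesian_product) simp
  also have "\<dots> = (\<Sum>k\<in>UNIV. f (False,k) + f (True,k))" by (simp add: UNIV_bool sum.distrib)
  finally show ?thesis .
qed

lemma minv_explicit:
  fixes x0 :: real and xk :: "'n::finite \<Rightarrow> real"
  assumes den: "\<And>k. x0^2 \<noteq> (xk k)^2"
  defines "Cm \<equiv> (\<chi> p p'. if snd p = snd p' then (if fst p = fst p' then x0 else xk (snd p)) else 0) :: real^(bool\<times>'n)^(bool\<times>'n)"
    and "Pm \<equiv> (\<chi> p p'. if snd p = snd p' then (if fst p = fst p' then x0 else - xk (snd p)) / (x0^2 - (xk (snd p))^2) else 0) :: real^(bool\<times>'n)^(bool\<times>'n)"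
  shows "matrix_inv Cm = Pm"
proof -
  have d: "x0^2 - (xk k)^2 \<noteq> 0" for k using den[of k] by simp
  have d2: "x0*(x0*(x0*x0)) + xk k*(xk k*(xk k*xk k)) \<noteq> x0*(x0*(xk k*(xk k*2)))" for k
  proof
    assume "x0*(x0*(x0*x0)) + xk k*(xk k*(xk k*xk k)) = x0*(x0*(xk k*(xk k*2)))"
    hence "(x0^2 - (xk k)^2) * (x0^2 - (xk k)^2) = 0" by (simp add: power2_eq_square algebra_simps)
    thus False using d[of k] by simp
  qed
  have CP: "Cm ** Pm = mat 1"
  proof (subst vec_eq_iff, intro allI, subst vec_eq_iff, intro allI)
    fix p p'' :: "bool \<times> 'n"
    obtain b k where p: "p = (b,k)" by (cases p)
    obtain b'' k'' where p'': "p'' = (b'',k'')" by (cases p'')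
    show "(Cm ** Pm) $ p $ p'' = mat 1 $ p $ p''"
      unfolding matrix_matrix_mult_def Cm_def Pm_def p p'' using d[of k] d[of k''] d2[of k'']
      by (cases b; cases b'') (auto simp: sum_bool_prod mat_def if_distrib[of "\<lambda>x. _ * x"] sum.delta sum.delta' sum.distrib field_simps power2_eq_square cong: if_cong)
  qed
  have PC: "Pm ** Cm = mat 1"
  proof (subst vec_eq_iff, intro allI, subst vec_eq_iff, intro allI)
    fix p p'' :: "bool \<times> 'n"
    obtain b k where p: "p = (b,k)" by (cases p)
    obtain b'' k'' where p'': "p'' = (b'',k'')" by (cases p'')
    show "(Pm ** Cm) $ p $ p'' = mat 1 $ p $ p''"
      unfolding matrix_matrix_mult_def Cm_def Pm_def p p'' using d[of k] d[of k''] d2[of k'']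
      by (cases b; cases b'') (auto simp: sum_bool_prod mat_def if_distrib[of "\<lambda>x. _ * x"] sum.delta sum.delta' sum.distrib field_simps power2_eq_square cong: if_cong)
  qed
  have ex: "\<exists>A'. Cm ** A' = mat 1 \<and> A' ** Cm = mat 1" using CP PC by blast
  define Q where "Q = matrix_inv Cm"
  have Q: "Cm ** Q = mat 1 \<and> Q ** Cm = mat 1" unfolding Q_def matrix_inv_def by (rule someI_ex[OF ex])
  have "Q = Q ** (Cm ** Pm)" by (simp add: CP)
  also have "\<dots> = (Q ** Cm) ** Pm" by (simp add: matrix_mul_assoc)
  also have "\<dots> = Pm" using Q by simp
  finally show ?thesis unfolding Q_def .
qed


lemma regress_alg:
  fixes P C :: "real^'p::finite^'p" and \<beta> :: "'q \<Rightarrow> 'p \<Rightarrow> real"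
  assumes PC: "P ** C = mat 1" and Csym: "\<And>a b. C$a$b = C$b$a"
  shows "z + (\<Sum>p'\<in>UNIV. - (\<Sum>p\<in>UNIV. \<beta> q p * P$p$p') * \<beta> q' p')
           + (\<Sum>p'\<in>UNIV. - (\<Sum>p\<in>UNIV. \<beta> q' p * P$p$p') * \<beta> q p')
           + (\<Sum>p'\<in>UNIV. \<Sum>p''\<in>UNIV. (- (\<Sum>p\<in>UNIV. \<beta> q p * P$p$p')) * (- (\<Sum>p\<in>UNIV. \<beta> q' p * P$p$p'')) * C$p'$p'')
         = z - (\<Sum>p'\<in>UNIV. (\<Sum>p\<in>UNIV. \<beta> q' p * P$p$p') * \<beta> q p')"
proof -
  define \<gamma> where "\<gamma> q p' = (\<Sum>p\<in>UNIV. \<beta> q p * P$p$p')" for q p'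
  have key: "(\<Sum>p''\<in>UNIV. \<gamma> q' p'' * C$p'$p'') = \<beta> q' p'" for p'
  proof -
    have "(\<Sum>p''\<in>UNIV. \<gamma> q' p'' * C$p'$p'') = (\<Sum>p''\<in>UNIV. \<Sum>p\<in>UNIV. \<beta> q' p * (P$p$p'' * C$p''$p'))"
      unfolding \<gamma>_def by (simp add: sum_distrib_right Csym[of p'] mult.assoc)
    also have "\<dots> = (\<Sum>p\<in>UNIV. \<beta> q' p * (\<Sum>p''\<in>UNIV. P$p$p'' * C$p''$p'))"
      by (subst sum.swap) (simp add: sum_distrib_left)
    also have "\<dots> = (\<Sum>p\<in>UNIV. \<beta> q' p * (mat 1 :: real^'p^'p)$p$p')"
      by (simp add: PC[symmetric] matrix_matrix_mult_def)
    also have "\<dots> = \<beta> q' p'" by (simp add: mat_def if_distrib[of "\<lambda>x. _ * x"] sum.delta' cong: if_cong)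
    finally show ?thesis .
  qed
  have "(\<Sum>p'\<in>UNIV. \<Sum>p''\<in>UNIV. (- \<gamma> q p') * (- \<gamma> q' p'') * C$p'$p'') = (\<Sum>p'\<in>UNIV. \<gamma> q p' * \<beta> q' p')"
    by (simp add: key[symmetric] sum_distrib_left mult.assoc)
  then show ?thesis unfolding \<gamma>_def[symmetric] by (simp add: sum_negf)
qed

lemma k11_ax: fixes r :: "nat \<Rightarrow> real \<Rightarrow> real" shows "k11 r i j (c *\<^sub>R axis a 1) = -4 * r 2 (c^2) * c^2 * dl a i * dl a j - 2 * r 1 (c^2) * dl i j"
  by (simp add: k11_def norm_axis2 axis_comp axis_nth_dl power2_eq_square algebra_simps)

lemma k21_ax: fixes r :: "nat \<Rightarrow> real \<Rightarrow> real" shows "k21 r i j k (c *\<^sub>R axis a 1) = -8 * r 3 (c^2) * c^3 * dl a i * dl a j * dl a k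
   - 4 * r 2 (c^2) * c * (dl i j * dl a k + dl i k * dl a j + dl j k * dl a i)"
  by (simp add: k21_def norm_axis2 axis_comp axis_nth_dl power3_eq_cube algebra_simps)

lemma k22_ax: fixes r :: "nat \<Rightarrow> real \<Rightarrow> real" shows "k22 r i j k l (c *\<^sub>R axis a 1) = 16 * r 4 (c^2) * c^4 * dl a i * dl a j * dl a k * dl a l
   + 8 * r 3 (c^2) * c^2 * (dl i j * dl a k * dl a l + dl i k * dl a j * dl a l + dl i l * dl a j * dl a k
        + dl j k * dl a i * dl a l + dl j l * dl a i * dl a k + dl k l * dl a i * dl a j)
   + 4 * r 2 (c^2) * (dl i j * dl k l + dl i k * dl j l + dl i l * dl j k)"
  by (simp add: k22_def norm_axis2 axis_comp axis_nth_dl power4_eq_xxxx power2_eq_square algebra_simps)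

lemma idx1_le: "(idx1::'n::{finite,linorder}) \<le> x"
  unfolding idx1_def by simp


definition "cc (\<rho>::real) b b' = (if b then \<rho> else 0) - (if b' then \<rho> else 0)"
definition "cq (\<rho>::real) b = (if b then \<rho> else - \<rho>)"
definition "cbk (r::nat \<Rightarrow> real \<Rightarrow> real) \<rho> k = -4 * r 2 (\<rho>^2) * \<rho>^2 * dl idx1 k - 2 * r 1 (\<rho>^2)"
definition "Pval (r::nat \<Rightarrow> real \<Rightarrow> real) \<rho> b b' k = (if b = b' then -2 * r 1 0 else - cbk r \<rho> k) / ((-2 * r 1 0)^2 - (cbk r \<rho> k)^2)"
definition "den1 (r::nat \<Rightarrow> real \<Rightarrow> real) (\<rho>::real) = (r 1 0)^2 - (r 1 (\<rho>^2) + 2 * r 2 (\<rho>^2) * \<rho>^2)^2"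
definition "den2 (r::nat \<Rightarrow> real \<Rightarrow> real) (\<rho>::real) = (r 1 0)^2 - (r 1 (\<rho>^2))^2"

lemma Pval_alt: "Pval r \<rho> b b' k = (if b = b' then -2 * r 1 0 else - cbk r \<rho> k) / (4 * (if k = idx1 then den1 r \<rho> else den2 r \<rho>))"
proof -
  have "(-2 * r 1 0)^2 - (cbk r \<rho> k)^2 = 4 * (if k = idx1 then den1 r \<rho> else den2 r \<rho>)"
    by (simp add: cbk_def den1_def den2_def dl_def power2_eq_square algebra_simps)
  then show ?thesis unfolding Pval_def by simp
qed

definition "Aq (r::nat \<Rightarrow> real \<Rightarrow> real) (\<rho>::real) (i::'n::{finite,linorder}) j = (if i = j then (if i = idx1 then 12 * r 2 (\<rho>^2) + 8 * \<rho>^2 * r 3 (\<rho>^2) else 4 * r 2 (\<rho>^2))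
    else (if i = idx1 then 4 * r 2 (\<rho>^2) else 0))"
definition "mq (i::'n::{finite,linorder}) j = (if i = j then idx1 else j)"

lemma cq_mult: "cq \<rho> b * cq \<rho> b' = (if b = b' then \<rho>^2 else - (\<rho>^2))"
  by (simp add: cq_def power2_eq_square)

lemma cc_sq: "(cc \<rho> b b')^2 = (if b = b' then 0 else \<rho>^2)"
  by (simp add: cc_def power2_eq_square)

lemma k22_ax': fixes r :: "nat \<Rightarrow> real \<Rightarrow> real" shows "k22 r i j k l (c *\<^sub>R axis a 1) = 16 * r 4 (c^2) * (c^2)^2 * dl a i * dl a j * dl a k * dl a l
   + 8 * r 3 (c^2) * c^2 * (dl i j * dl a k * dl a l + dl i k * dl a j * dl a l + dl i l * dl a j * dl a k
        + dl j k * dl a i * dl a l + dl j l * dl a i * dl a k + dl k l * dl a i * dl a j)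
   + 4 * r 2 (c^2) * (dl i j * dl k l + dl i k * dl j l + dl i l * dl j k)"
  unfolding k22_ax by (simp add: power_mult[symmetric])

lemma final_diag:
  fixes r :: "nat \<Rightarrow> real \<Rightarrow> real" and i k :: "'n::{finite,linorder}"
  shows "k22 r i i k k (cc \<rho> b b' *\<^sub>R axis idx1 1) - Aq r \<rho> i i * Aq r \<rho> k k * (if mq i i = mq k k then cq \<rho> b * cq \<rho> b' * Pval r \<rho> b b' (mq i i) else 0)
    = Kcov r \<rho> (b,i,i) (b',k,k)"
proof -
  have l: "idx1 \<le> x" for x :: 'n by (rule idx1_le)
  show ?thesis
    unfolding Kcov_def Let_def
    apply (fold den1_def den2_def)
    apply (simp add: k22_ax' Aq_def mq_def cc_sq mult.assoc[symmetric] cq_mult)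
    apply (cases b; cases b')
    apply (simp_all add: Pval_alt cbk_def dl_def)
    apply (auto simp: field_split_simps algebra_simps)
    apply (simp_all add: power_numeral_reduce algebra_simps)
    done
qed

lemma final_off_eq:
  fixes r :: "nat \<Rightarrow> real \<Rightarrow> real" and i j :: "'n::{finite,linorder}"
  assumes ij: "i < j"
  shows "k22 r i j i j (cc \<rho> b b' *\<^sub>R axis idx1 1) - Aq r \<rho> i j * Aq r \<rho> i j * (if mq i j = mq i j then cq \<rho> b * cq \<rho> b' * Pval r \<rho> b b' (mq i j) else 0)
    = Kcov r \<rho> (b,i,j) (b',i,j)"
proof -
  have j1: "j \<noteq> idx1" "idx1 \<noteq> j" using ij idx1_le[of i] by auto
  have ne: "i \<noteq> j" "j \<noteq> i" using ij by auto
  show ?thesis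
    unfolding Kcov_def Let_def
    apply (fold den1_def den2_def)
    apply (simp add: k22_ax' Aq_def mq_def cc_sq mult.assoc[symmetric] cq_mult ne j1)
    apply (cases b; cases b')
    apply (simp_all add: Pval_alt cbk_def dl_def ne j1)
    apply (auto simp: field_split_simps algebra_simps)
    apply (simp_all add: power_numeral_reduce algebra_simps)
    done
qed

lemma final_off:
  fixes r :: "nat \<Rightarrow> real \<Rightarrow> real" and i j k l :: "'n::{finite,linorder}"
  assumes ij: "i < j" and kl: "k < l"
  shows "k22 r i j k l (cc \<rho> b b' *\<^sub>R axis idx1 1) - Aq r \<rho> i j * Aq r \<rho> k l * (if mq i j = mq k l then cq \<rho> b * cq \<rho> b' * Pval r \<rho> b b' (mq i j) else 0)
    = Kcov r \<rho> (b,i,j) (b',k,l)"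
proof (cases "i = k \<and> j = l")
  case True then show ?thesis using final_off_eq[OF ij] by simp
next
  case False
  have j1: "j \<noteq> idx1" "idx1 \<noteq> j" using ij idx1_le[of i] by auto
  have l1: "l \<noteq> idx1" "idx1 \<noteq> l" using kl idx1_le[of k] by auto
  have ne: "i \<noteq> j" "j \<noteq> i" "k \<noteq> l" "l \<noteq> k" using ij kl by auto
  have z1: "dl j k * dl l i = 0" "dl i k * dl j l = 0" "dl i l * dl j k = 0" "dl j l * dl idx1 i * dl idx1 k = 0"
    using False ij kl by (auto simp: dl_def)
  have z2: "mq i j = mq k l \<Longrightarrow> Aq r \<rho> i j * Aq r \<rho> k l = 0"
    using False ij kl by (auto simp: mq_def Aq_def)
  have K0: "Kcov r \<rho> (b,i,j) (b',k,l) = 0"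
    unfolding Kcov_def Let_def using False ne by auto
  have "k22 r i j k l (cc \<rho> b b' *\<^sub>R axis idx1 1) = 0"
    unfolding k22_ax' using False ij kl j1 l1 ne by (auto simp: dl_def)
  then show ?thesis using K0 z2 by auto
qed

lemma final_mix1:
  fixes r :: "nat \<Rightarrow> real \<Rightarrow> real" and i k l :: "'n::{finite,linorder}"
  assumes kl: "k < l"
  shows "k22 r i i k l (cc \<rho> b b' *\<^sub>R axis idx1 1) - Aq r \<rho> i i * Aq r \<rho> k l * (if mq i i = mq k l then cq \<rho> b * cq \<rho> b' * Pval r \<rho> b b' (mq i i) else 0)
    = Kcov r \<rho> (b,i,i) (b',k,l)"
proof -
  have l1: "l \<noteq> idx1" "idx1 \<noteq> l" using kl idx1_le[of k] by auto
  have ne: "k \<noteq> l" "l \<noteq> k" using kl by auto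
  show ?thesis
    unfolding Kcov_def Let_def
    using l1 ne by (simp add: k22_ax' Aq_def mq_def dl_def)
qed

lemma final_mix2:
  fixes r :: "nat \<Rightarrow> real \<Rightarrow> real" and i j k :: "'n::{finite,linorder}"
  assumes ij: "i < j"
  shows "k22 r i j k k (cc \<rho> b b' *\<^sub>R axis idx1 1) - Aq r \<rho> i j * Aq r \<rho> k k * (if mq i j = mq k k then cq \<rho> b * cq \<rho> b' * Pval r \<rho> b b' (mq i j) else 0)
    = Kcov r \<rho> (b,i,j) (b',k,k)"
proof -
  have j1: "j \<noteq> idx1" "idx1 \<noteq> j" using ij idx1_le[of i] by auto
  have ne: "i \<noteq> j" "j \<noteq> i" using ij by auto
  show ?thesis
    unfolding Kcov_def Let_def
    using j1 ne by (auto simp: k22_ax' Aq_def mq_def dl_def)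
qed

lemma final_alg:
  fixes r :: "nat \<Rightarrow> real \<Rightarrow> real" and i j k l :: "'n::{finite,linorder}"
  assumes ij: "i \<le> j" and kl: "k \<le> l"
  shows "k22 r i j k l (cc \<rho> b b' *\<^sub>R axis idx1 1) - Aq r \<rho> i j * Aq r \<rho> k l * (if mq i j = mq k l then cq \<rho> b * cq \<rho> b' * Pval r \<rho> b b' (mq i j) else 0)
    = Kcov r \<rho> (b,i,j) (b',k,l)"
proof (cases "i = j")
  case True
  then show ?thesis
  proof (cases "k = l")
    case True show ?thesis unfolding \<open>i = j\<close> True by (rule final_diag)
  next
    case False with kl have "k < l" by simp
    then show ?thesis unfolding \<open>i = j\<close> by (rule final_mix1)
  qed
next
  case False
  then show ?thesis
  proof (cases "k = l")
    case True from \<open>i \<noteq> j\<close> ij have "i < j" by simp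
    then show ?thesis unfolding True by (rule final_mix2)
  next
    case False with \<open>i \<noteq> j\<close> ij kl have "i < j" "k < l" by auto
    then show ?thesis by (rule final_off)
  qed
qed


lemma cg_cong: "centred_gaussian M W I K \<Longrightarrow> (\<And>i j. i \<in> I \<Longrightarrow> j \<in> I \<Longrightarrow> K i j = K' i j) \<Longrightarrow> centred_gaussian M W I K'"
proof -
  assume cg: "centred_gaussian M W I K" and KK: "\<And>i j. i \<in> I \<Longrightarrow> j \<in> I \<Longrightarrow> K i j = K' i j"
  show ?thesis unfolding centred_gaussian_def
  proof (intro conjI allI impI ballI)
    fix i assume "i \<in> I" then show "W i \<in> borel_measurable M" by (rule cg_meas[OF cg])
  next
    fix F c assume F: "finite F" "F \<subseteq> I"
    have "(\<Sum>i\<in>F. \<Sum>j\<in>F. c i * c j * K i j) = (\<Sum>i\<in>F. \<Sum>j\<in>F. c i * c j * K' i j)"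
      using F KK by (intro sum.cong refl) (auto simp: subset_iff)
    then show "(CLINT \<omega>|M. iexp (\<Sum>i\<in>F. c i * W i \<omega>)) = complex_of_real (exp (- (\<Sum>i\<in>F. \<Sum>j\<in>F. c i * c j * K' i j) / 2))"
      using cg_char[OF cg F] by simp
  qed
qed

lemma sum_final:
  fixes \<beta>q \<beta>q' :: "bool \<times> 'n::finite \<Rightarrow> real" and P :: "real^(bool\<times>'n)^(bool\<times>'n)"
  assumes bq: "\<And>b2 m. \<beta>q (b2,m) = (if b2 = b then 0 else - cq \<rho> b * A * dl mm m)"
    and bq': "\<And>b1 m. \<beta>q' (b1,m) = (if b1 = b' then 0 else - cq \<rho> b' * A' * dl mm' m)"
    and P: "\<And>b1 m b2 m'. P$(b1,m)$(b2,m') = (if m = m' then (if b1 = b2 then x0 else - xk m) / (x0^2 - (xk m)^2) else 0)"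
  shows "(\<Sum>p'\<in>UNIV. (\<Sum>p\<in>UNIV. \<beta>q' p * P$p$p') * \<beta>q p')
    = A * A' * (if mm = mm' then cq \<rho> b * cq \<rho> b' * ((if b = b' then x0 else - xk mm) / (x0^2 - (xk mm)^2)) else 0)"
proof -
  have inner: "(\<Sum>p\<in>UNIV. \<beta>q' p * P$p$(b2,m')) = - cq \<rho> b' * A' * dl mm' m' * (if \<not> b' = b2 then x0 else - xk m') / (x0^2 - (xk m')^2)" for b2 m'
    unfolding sum_bool_prod bq' P
    by (cases b'; cases b2) (auto simp: if_distrib[of "\<lambda>x. _ * x"] sum.delta' sum.distrib cong: if_cong)
  have inner': "(\<Sum>p\<in>UNIV. \<beta>q' p * P$p$p') = - cq \<rho> b' * A' * dl mm' (snd p') * (if \<not> b' = fst p' then x0 else - xk (snd p')) / (x0^2 - (xk (snd p'))^2)" for p'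
    using inner[of "fst p'" "snd p'"] by simp
  show ?thesis
    apply (simp only: inner')
    unfolding sum_bool_prod bq
    by (cases b; cases b') (auto simp: dl_def if_distrib[of "\<lambda>x. _ * x"] sum.delta sum.delta' sum.distrib cong: if_cong)
qed


lemma beta_form:
  fixes r :: "nat \<Rightarrow> real \<Rightarrow> real" and i j m :: "'n::{finite,linorder}"
  assumes ij: "i \<le> j"
  shows "k21 r i j m (cc \<rho> b b2 *\<^sub>R axis idx1 1) = (if b2 = b then 0 else - cq \<rho> b * Aq r \<rho> i j * dl (mq i j) m)"
proof (cases "b2 = b")
  case True then show ?thesis by (simp add: k21_def cc_def)
next
  case False
  have c: "cc \<rho> b b2 = cq \<rho> b" using False by (cases b; cases b2) (auto simp: cc_def cq_def)
  have c2: "(cq \<rho> b)^2 = \<rho>^2" "(cq \<rho> b)^3 = cq \<rho> b * \<rho>^2" by (auto simp: cq_def power2_eq_square power3_eq_cube)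
  have l: "idx1 \<le> i" by (rule idx1_le)
  show ?thesis
  proof (cases "i = j")
    case True
    then show ?thesis using False unfolding k21_ax c c2
      by (cases "i = idx1") (auto simp: Aq_def mq_def dl_def algebra_simps)
  next
    case ne: False
    with ij l have j1: "j \<noteq> idx1" "idx1 \<noteq> j" by auto
    show ?thesis using False ne j1 unfolding k21_ax c c2
      by (cases "i = idx1") (auto simp: Aq_def mq_def dl_def algebra_simps)
  qed
qed

lemma sum_if_cond: "(\<Sum>x\<in>A. if c then f x else 0) = (if c then sum f A else (0::real))"
  by simp

lemma sum_UNIV_sum: "sum f (UNIV :: ('a::finite + 'b::finite) set) = sum (\<lambda>x. f (Inl x)) UNIV + sum (\<lambda>x. f (Inr x)) UNIV"
proof -
  have "sum f (UNIV :: ('a + 'b) set) = sum f (UNIV <+> UNIV)" by (simp add: UNIV_Plus_UNIV)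
  also have "\<dots> = sum (\<lambda>x. f (Inl x)) UNIV + sum (\<lambda>x. f (Inr x)) UNIV" by (subst sum.Plus) (auto simp: o_def)
  finally show ?thesis .
qed

lemma minv_PC:
  fixes x0 :: real and xk :: "'n::finite \<Rightarrow> real"
  assumes den: "\<And>k. x0^2 \<noteq> (xk k)^2"
  defines "Cm \<equiv> (\<chi> p p'. if snd p = snd p' then (if fst p = fst p' then x0 else xk (snd p)) else 0) :: real^(bool\<times>'n)^(bool\<times>'n)"
    and "Pm \<equiv> (\<chi> p p'. if snd p = snd p' then (if fst p = fst p' then x0 else - xk (snd p)) / (x0^2 - (xk (snd p))^2) else 0) :: real^(bool\<times>'n)^(bool\<times>'n)"
  shows "matrix_inv Cm ** Cm = mat 1"
proof -
  have d: "x0^2 - (xk k)^2 \<noteq> 0" for k using den[of k] by simp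
  have d2: "x0*(x0*(x0*x0)) + xk k*(xk k*(xk k*xk k)) \<noteq> x0*(x0*(xk k*(xk k*2)))" for k
  proof
    assume "x0*(x0*(x0*x0)) + xk k*(xk k*(xk k*xk k)) = x0*(x0*(xk k*(xk k*2)))"
    hence "(x0^2 - (xk k)^2) * (x0^2 - (xk k)^2) = 0" by (simp add: power2_eq_square algebra_simps)
    thus False using d[of k] by simp
  qed
  have eq: "matrix_inv Cm = Pm" unfolding Cm_def Pm_def by (rule minv_explicit[OF den])
  have PC: "Pm ** Cm = mat 1"
  proof (subst vec_eq_iff, intro allI, subst vec_eq_iff, intro allI)
    fix p p'' :: "bool \<times> 'n"
    obtain b k where p: "p = (b,k)" by (cases p)
    obtain b'' k'' where p'': "p'' = (b'',k'')" by (cases p'')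
    show "(Pm ** Cm) $ p $ p'' = mat 1 $ p $ p''"
      unfolding matrix_matrix_mult_def Cm_def Pm_def p p'' using d[of k] d[of k''] d2[of k'']
      by (cases b; cases b'') (auto simp: sum_bool_prod mat_def if_distrib[of "\<lambda>x. _ * x"] sum.delta sum.delta' sum.distrib field_simps power2_eq_square cong: if_cong)
  qed
  show ?thesis using eq PC by simp
qed

theorem lemma4:
  fixes M :: "'a measure"
    and X :: "real^'n::{finite,linorder} \<Rightarrow> 'a \<Rightarrow> real"
    and r :: "nat \<Rightarrow> real \<Rightarrow> real"
    and \<rho> :: real
  assumes "prob_space M"
    \<comment> \<open>(A4): centred stationary isotropic Gaussian field with covariance r(|s-t|^2)\<close>
    and gauss: "centred_gaussian M X UNIV (\<lambda>s t. r 0 ((norm (s - t))^2))"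
    and paths: "\<forall>\<omega>\<in>space M. C2_fun (\<lambda>s. X s \<omega>)"
    and var1: "r 0 0 = 1"
    \<comment> \<open>r k is the k-th derivative of r on [0,oo), r in C^4\<close>
    and deriv_r: "\<forall>k<4. \<forall>x\<ge>0. (r k has_real_derivative r (Suc k) x) (at x within {0..})"
    and cont4: "continuous_on {0..} (r 4)"
    and lam2: "lam r 1 > 0"
    and N1: "CARD('n) = 1 \<longrightarrow> (\<forall>n\<in>{2,3,4::nat}. lam r n * lam r (n-2) > (lam r (n-1))^2)"
    and rho: "\<rho> > 0"
    \<comment> \<open>Y = (grad X(0), grad X(t)), t = rho e_1; Z = (Hess X(0), Hess X(t))\<close>
    and Y_def: "Y = (\<lambda>(b, i) \<omega>. partial i (\<lambda>s. X s \<omega>)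
                        (if b then \<rho> *\<^sub>R axis (idx1::'n) 1 else 0))"
    and Z_def: "Z = (\<lambda>(b, i, j) \<omega>. partial i (partial j (\<lambda>s. X s \<omega>))
                        (if b then \<rho> *\<^sub>R axis (idx1::'n) 1 else 0))"
    \<comment> \<open>(grad X(0), grad X(t)) has a nondegenerate distribution\<close>
    and nondeg: "\<forall>c :: bool \<times> 'n \<Rightarrow> real. c \<noteq> (\<lambda>_. 0) \<longrightarrow>
                   \<not> (AE \<omega> in M. (\<Sum>p\<in>UNIV. c p * Y p \<omega>) = 0)"
    \<comment> \<open>xi = (Hess X(0), Hess X(t)) conditioned on grad X(0) = grad X(t) = 0\<close>
    and xi_def: "\<xi> = regress M Y Z"
  shows "centred_gaussian M \<xi> {(b, i, j). i \<le> j} (Kcov r \<rho>)"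
proof -
  note P = assms(1)
  interpret prob_space M by (rule P)
  define ptv where "ptv b = (if b then \<rho> *\<^sub>R axis (idx1::'n) (1::real) else 0)" for b
  have Yeq: "Y p = Uf X (D1 (ptv (fst p)) (snd p))" for p
    by (cases p) (simp add: Y_def Uf_def ptv_def fun_eq_iff)
  have Zeq: "Z q = Uf X (D2 (ptv (fst q)) (fst (snd q)) (snd (snd q)))" for q
    by (cases q) (simp add: Z_def Uf_def ptv_def fun_eq_iff)
  have st2: "centred_gaussian M (Uf X) (DS1 \<union> DS2) (Kf r)" by (rule stage2[OF P gauss paths deriv_r])
  have diff: "ptv b - ptv b' = cc \<rho> b b' *\<^sub>R axis idx1 1" for b b'
    by (cases b; cases b') (simp_all add: ptv_def cc_def)
  have cgcov: "gcov M (Uf X x) (Uf X y) = Kf r x y" if "x \<in> DS1 \<union> DS2" "y \<in> DS1 \<union> DS2" for x y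
    using cg_cov[OF P st2 that] Kf_sym[of r y x] by simp
  have covY: "gcov M (Y p) (Y p') = Kf r (D1 (ptv (fst p)) (snd p)) (D1 (ptv (fst p')) (snd p'))" for p p'
    unfolding Yeq by (rule cgcov) (auto simp: DS1_def)
  have covZY: "gcov M (Z q) (Y p) = Kf r (D2 (ptv (fst q)) (fst (snd q)) (snd (snd q))) (D1 (ptv (fst p)) (snd p))" for q p
    unfolding Yeq Zeq by (rule cgcov) (auto simp: DS1_def DS2_def)
  have Cform: "Kf r (D1 (ptv b) k) (D1 (ptv b') k') = (if k = k' then (if b = b' then -2 * r 1 0 else cbk r \<rho> k) else 0)" for b b' k k'
    unfolding Kf.simps diff k11_ax cc_sq by (cases b; cases b') (auto simp: cbk_def dl_def)
  have den: "(-2 * r 1 0)^2 \<noteq> (cbk r \<rho> k)^2" for k :: 'n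
  proof
    assume eq: "(-2 * r 1 0)^2 = (cbk r \<rho> k)^2"
    define s where "s = (if cbk r \<rho> k = -2 * r 1 0 then -1 else (1::real))"
    have s: "-2 * r 1 0 + s * cbk r \<rho> k = 0" "s * s = 1"
      using eq unfolding s_def power2_eq_iff by auto
    define cf where "cf p = (if snd p = k then (if fst p then s else 1) else (0::real))" for p :: "bool \<times> 'n"
    have cf_nz: "cf \<noteq> (\<lambda>_. 0)" by (auto simp: cf_def fun_eq_iff)
    define V where "V \<omega> = (\<Sum>p\<in>UNIV. cf p * Y p \<omega>)" for \<omega>
    define \<sigma> where "\<sigma> = (\<Sum>p\<in>UNIV. \<Sum>p'\<in>UNIV. cf p * cf p' * Kf r (D1 (ptv (fst p)) (snd p)) (D1 (ptv (fst p')) (snd p')))"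
    have mY: "Y p \<in> borel_measurable M" for p
      unfolding Yeq by (rule cg_meas[OF st2]) (auto simp: DS1_def)
    have mV: "V \<in> borel_measurable M" unfolding V_def using mY by measurable
    have ch: "(CLINT \<omega>|M. iexp (t * V \<omega>)) = complex_of_real (exp (- (t * t * \<sigma>) / 2))" for t
    proof -
      have "(CLINT \<omega>|M. iexp (\<Sum>p\<in>UNIV. (t * cf p) * Uf X (D1 (ptv (fst p)) (snd p)) \<omega>))
        = complex_of_real (exp (- (\<Sum>p\<in>UNIV. \<Sum>p'\<in>UNIV. (t * cf p) * (t * cf p') * Kf r (D1 (ptv (fst p)) (snd p)) (D1 (ptv (fst p')) (snd p'))) / 2))"
        by (rule cg_lin[OF st2]) (auto simp: DS1_def)
      moreover have "(\<Sum>p\<in>UNIV. (t * cf p) * Uf X (D1 (ptv (fst p)) (snd p)) \<omega>) = t * V \<omega>" for \<omega>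
        unfolding V_def Yeq by (simp add: sum_distrib_left mult.assoc)
      moreover have "(\<Sum>p\<in>UNIV. \<Sum>p'\<in>UNIV. (t * cf p) * (t * cf p') * Kf r (D1 (ptv (fst p)) (snd p)) (D1 (ptv (fst p')) (snd p'))) = t * t * \<sigma>"
        unfolding \<sigma>_def by (simp add: sum_distrib_left algebra_simps)
      ultimately show ?thesis by simp
    qed
    have \<sigma>0: "\<sigma> = 0"
    proof -
      have "\<sigma> = 2 * (-2 * r 1 0) + 2 * s * cbk r \<rho> k + (s * s - 1) * (-2 * r 1 0)"
        unfolding \<sigma>_def Cform sum_bool_prod cf_def
        by (simp add: if_distrib[of "\<lambda>x. x * _"] if_distrib[of "\<lambda>x. _ * x"] sum.delta sum.delta' sum.distrib sum_subtractf algebra_simps cong: if_cong)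
      then show ?thesis using s by simp
    qed
    have gv: "integrable M (\<lambda>\<omega>. (V \<omega>)^2) \<and> (LINT \<omega>|M. (V \<omega>)^2) = \<sigma>"
      by (rule gauss_var[OF P mV ch])
    have "AE \<omega> in M. (V \<omega>)^2 = 0"
      using gv \<sigma>0 integral_nonneg_eq_0_iff_AE[of M "\<lambda>\<omega>. (V \<omega>)^2"] by auto
    then have "AE \<omega> in M. (\<Sum>p\<in>UNIV. cf p * Y p \<omega>) = 0" unfolding V_def by simp
    then show False using nondeg cf_nz by blast
  qed
  define Cm where "Cm = (\<chi> p1 p2. gcov M (Y p1) (Y p2))"
  have Cm_eq: "Cm = (\<chi> p p'. if snd p = snd p' then (if fst p = fst p' then -2 * r 1 0 else cbk r \<rho> (snd p)) else 0)"
    unfolding Cm_def covY Cform by (rule refl)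
  have Minv: "matrix_inv Cm = (\<chi> p p'. if snd p = snd p' then (if fst p = fst p' then -2 * r 1 0 else - cbk r \<rho> (snd p)) / ((-2 * r 1 0)^2 - (cbk r \<rho> (snd p))^2) else 0)"
    unfolding Cm_eq by (rule minv_explicit) (rule den)
  have PC: "matrix_inv Cm ** Cm = mat 1"
    unfolding Cm_eq by (rule minv_PC) (rule den)
  define gY where "gY x = (case x of Inl p \<Rightarrow> D1 (ptv (fst p)) (snd p) | Inr q \<Rightarrow> D2 (ptv (fst q)) (fst (snd q)) (snd (snd q)))" for x
  define a where "a q x = (case x of Inl p' \<Rightarrow> - (\<Sum>p\<in>UNIV. gcov M (Z q) (Y p) * matrix_inv Cm $ p $ p') | Inr q' \<Rightarrow> (if q' = q then 1 else 0))" for q x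
  have xi_rep: "\<xi> q = (\<lambda>\<omega>. \<Sum>m\<in>UNIV. a q m * Uf X (gY m) \<omega>)" for q
    unfolding xi_def regress_def Cm_def[symmetric]
  proof (rule ext)
    fix \<omega>
    have "(\<Sum>m\<in>UNIV. a q m * Uf X (gY m) \<omega>) = (\<Sum>p'\<in>UNIV. - (\<Sum>p\<in>UNIV. gcov M (Z q) (Y p) * matrix_inv Cm $ p $ p') * Y p' \<omega>) + Z q \<omega>"
      by (simp add: sum_UNIV_sum a_def gY_def Yeq Zeq if_distrib[of "\<lambda>x. x * _"] sum.delta' cong: if_cong)
    also have "\<dots> = Z q \<omega> - (\<Sum>p\<in>UNIV. \<Sum>p'\<in>UNIV. gcov M (Z q) (Y p) * matrix_inv Cm $ p $ p' * Y p' \<omega>)"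
      by (subst sum.swap) (simp add: sum_distrib_right sum_negf)
    finally show "Z q \<omega> - (\<Sum>p\<in>UNIV. \<Sum>p'\<in>UNIV. gcov M (Z q) (Y p) * matrix_inv Cm $ p $ p' * Y p' \<omega>) = (\<Sum>m\<in>UNIV. a q m * Uf X (gY m) \<omega>)" by simp
  qed
  have cgx: "centred_gaussian M \<xi> {(b, i, j). i \<le> j} (\<lambda>q q'. \<Sum>m\<in>UNIV. \<Sum>m'\<in>UNIV. a q m * a q' m' * Kf r (gY m) (gY m'))"
    by (rule cg_image[OF st2]) (auto simp: xi_rep gY_def DS1_def DS2_def split: sum.splits)
  show ?thesis
  proof (rule cg_cong[OF cgx])
    fix q q' :: "bool \<times> 'n \<times> 'n" assume q: "q \<in> {(b, i, j). i \<le> j}" and q': "q' \<in> {(b, i, j). i \<le> j}"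
    obtain b i j where qd: "q = (b,i,j)" and ij: "i \<le> j" using q by auto
    obtain b' k l where q'd: "q' = (b',k,l)" and kl: "k \<le> l" using q' by auto
    define \<beta> where "\<beta> q1 p = gcov M (Z q1) (Y p)" for q1 p
    define Pm where "Pm = matrix_inv Cm"
    have Csym: "Cm$x$y = Cm$y$x" for x y unfolding Cm_def vec_lambda_beta covY by (rule Kf_sym)
    have Cent: "Kf r (gY (Inl x)) (gY (Inl y)) = Cm$x$y" for x y unfolding Cm_def covY gY_def vec_lambda_beta sum.case by (rule refl)
    have ZY: "Kf r (gY (Inr q1)) (gY (Inl p)) = \<beta> q1 p" for q1 p unfolding \<beta>_def covZY gY_def sum.case by (rule refl)
    have YZ: "Kf r (gY (Inl p)) (gY (Inr q1)) = \<beta> q1 p" for q1 p using ZY Kf_sym by metis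
    have a_inl: "a q1 (Inl p') = - (\<Sum>p\<in>UNIV. \<beta> q1 p * Pm$p$p')" for q1 p' unfolding a_def \<beta>_def Pm_def by simp
    have a_inr: "a q1 (Inr q2) = (if q2 = q1 then 1 else 0)" for q1 q2 unfolding a_def by simp
    have expand: "(\<Sum>m\<in>UNIV. \<Sum>m'\<in>UNIV. a q m * a q' m' * Kf r (gY m) (gY m'))
      = Kf r (gY (Inr q)) (gY (Inr q')) + (\<Sum>p'\<in>UNIV. - (\<Sum>p\<in>UNIV. \<beta> q p * Pm$p$p') * \<beta> q' p')
           + (\<Sum>p'\<in>UNIV. - (\<Sum>p\<in>UNIV. \<beta> q' p * Pm$p$p') * \<beta> q p')
           + (\<Sum>p'\<in>UNIV. \<Sum>p''\<in>UNIV. (- (\<Sum>p\<in>UNIV. \<beta> q p * Pm$p$p')) * (- (\<Sum>p\<in>UNIV. \<beta> q' p * Pm$p$p'')) * Cm$p'$p'')"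
      unfolding sum_UNIV_sum sum.distrib Cent ZY YZ a_inl a_inr
      by (simp add: if_distrib[of "\<lambda>x. x * _"] if_distrib[of "\<lambda>x. _ * x"] if_distrib[of uminus] sum_if_cond sum.delta sum.delta' sum.distrib algebra_simps cong: if_cong)
    have PC': "Pm ** Cm = mat 1" unfolding Pm_def by (rule PC)
    have bq: "\<beta> q (b2,m) = (if b2 = b then 0 else - cq \<rho> b * Aq r \<rho> i j * dl (mq i j) m)" for b2 m
      unfolding \<beta>_def covZY qd by (simp add: diff beta_form[OF ij])
    have bq': "\<beta> q' (b2,m) = (if b2 = b' then 0 else - cq \<rho> b' * Aq r \<rho> k l * dl (mq k l) m)" for b2 m
      unfolding \<beta>_def covZY q'd by (simp add: diff beta_form[OF kl])
    have Pent: "Pm$(b1,m)$(b2,m') = (if m = m' then (if b1 = b2 then -2 * r 1 0 else - cbk r \<rho> m) / ((-2 * r 1 0)^2 - (cbk r \<rho> m)^2) else 0)" for b1 m b2 m'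
      unfolding Pm_def Minv by simp
    have sf: "(\<Sum>p'\<in>UNIV. (\<Sum>p\<in>UNIV. \<beta> q' p * Pm$p$p') * \<beta> q p')
      = Aq r \<rho> i j * Aq r \<rho> k l * (if mq i j = mq k l then cq \<rho> b * cq \<rho> b' * Pval r \<rho> b b' (mq i j) else 0)"
      unfolding Pval_def by (rule sum_final[OF bq bq' Pent])
    have KZZ: "Kf r (gY (Inr q)) (gY (Inr q')) = k22 r i j k l (cc \<rho> b b' *\<^sub>R axis idx1 1)"
      unfolding gY_def qd q'd by (simp add: diff)
    show "(\<Sum>m\<in>UNIV. \<Sum>m'\<in>UNIV. a q m * a q' m' * Kf r (gY m) (gY m')) = Kcov r \<rho> q q'"
      unfolding expand regress_alg[OF PC' Csym] sf KZZ unfolding qd q'd by (rule final_alg[OF ij kl])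
  qed
qed


end
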